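(* Let $\mathbf{uGraph}$ be the category of finite undirected multigraphs and let $\mathcal M$ be the class of its component-wise monic morphisms. Then $(\mathbf{uGraph},\mathcal M)$ is a finitary $\mathcal M$-adhesive category with an $\mathcal M$-initial object, $\mathcal M$-effective unions and an epi-$\mathcal M$-factorization; moreover all final pullback complements (FPCs) of composable pairs of $\mathcal M$-morphisms exist in $\mathbf{uGraph}$, and $\mathcal M$-morphisms are stable under FPCs. (That is, $\mathbf{uGraph}$ satisfies the standing assumptions required both for Double-Pushout (DPO) and for Sesqui-Pushout (SqPO) rewriting.)
   Context: Let $\mathcal P^{(1,2)}:\mathbf{Set}\to\mathbf{Set}$ send a set $S$ to the set of its subsets $P\subseteq S$ with $1\le |P|\le 2$ (and a map to its direct-image map). An object of $\mathbf{uGraph}$ is a triple $G=(E_G,V_G,i_G)$ of finite sets $E_G$ (edges), $V_G$ (vertices) and a map $i_G:E_G\to\mathcal P^{(1,2)}(V_G)$; a morphism $G\to H$ is a pair $(\varphi_E:E_G\to E_H,\varphi_V:V_G\to V_H)$ with $i_H\circ\varphi_E=\mathcal P^{(1,2)}(\varphi_V)\circ i_G$ (i.e. $\mathbf{uGraph}$ is the finitary restriction of the comma category $(\mathrm{Id}_{\mathbf{Set}},\mathcal P^{(1,2)})$). $\mathcal M$ is the class of morphisms whose two components are injective. Terminology: $(\mathbf C,\mathcal M)$ is $\mathcal M$-adhesive if pushouts and pullbacks along $\mathcal M$-morphisms exist, $\mathcal M$ contains all isomorphisms and is stable under pushout, pullback and composition, and pushouts along $\mathcal M$-morphisms are $\mathcal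 M$-van Kampen squares; finitary means every object has finitely many $\mathcal M$-subobjects up to isomorphism; an $\mathcal M$-initial object $\varnothing$ admits a unique $\mathcal M$-morphism $\varnothing\hookrightarrow X$ to every object $X$; $\mathcal M$-effective unions means: if a cospan $(B\hookrightarrow D\hookleftarrow C)$ of $\mathcal M$-morphisms is the pushout of a span $(B\hookleftarrow A\hookrightarrow C)$, then for every cospan $(B\hookrightarrow E\hookleftarrow C)$ of $\mathcal M$-morphisms whose pullback is $(B\hookleftarrow A\hookrightarrow C)$, the induced morphism $D\to E$ is in $\mathcal M$; an epi-$\mathcal M$-factorization means every morphism factors as $m\circ e$ with $e$ epi and $m\in\mathcal M$, uniquely up to isomorphism. For composable $a:A\to B$, $b:B\to D$, a pair $(c:C\to D,d:A\to C)$ is a final pullback complement (FPC) if $(a,d)$ is a pullback of $(b,c)$ and for every pullback $(a\circ p,q)$ of $(b,r)$ (with $r:C'\to D$) there is a morphism $s$ with $r=c\circ s$, unique up to isomorphism; $\mathcal M$ is stable under FPCs if the FPC of a composable pair of $\mathcal M$-morphisms (when it exists) consists of $\mathcal M$-morphisms. *)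

theory Defs
  imports "HOL-Library.FuncSet"
begin

text \<open>Edges and vertices are
  drawn from nat (every finite multigraph is isomorphic to one of these, so this
  full subcategory is equivalent to uGraph). A graph is a triple (E, V, i) with
  i : E -> P^(1,2)(V); functions are kept extensional (undefined outside the
  carriers) so that HOL equality is the categorical equality of morphisms.\<close>

type_synonym ugraph = "nat set \<times> nat set \<times> (nat \<Rightarrow> nat set)"
type_synonym umor = "(nat \<Rightarrow> nat) \<times> (nat \<Rightarrow> nat)"

definition gE :: "ugraph \<Rightarrow> nat set" where "gE G = fst G"
definition gV :: "ugraph \<Rightarrow> nat set" where "gV G = fst (snd G)"
definition gi :: "ugraph \<Rightarrow> nat \<Rightarrow> nat set" where "gi G = snd (snd G)"

definition P12 :: "'a set \<Rightarrow> 'a set set" where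
  "P12 S = {P. P \<subseteq> S \<and> 1 \<le> card P \<and> card P \<le> 2}"

definition ug :: "ugraph \<Rightarrow> bool" where
  "ug G \<longleftrightarrow> finite (gE G) \<and> finite (gV G) \<and> gi G \<in> gE G \<rightarrow>\<^sub>E P12 (gV G)"

definition hom :: "ugraph \<Rightarrow> ugraph \<Rightarrow> umor set" where
  "hom G H = {(fE, fV). ug G \<and> ug H \<and> fE \<in> gE G \<rightarrow>\<^sub>E gE H \<and> fV \<in> gV G \<rightarrow>\<^sub>E gV H \<and>
      (\<forall>e\<in>gE G. gi H (fE e) = fV ` gi G e)}"

definition cmp :: "ugraph \<Rightarrow> umor \<Rightarrow> umor \<Rightarrow> umor" where
  "cmp G g f = (restrict (fst g \<circ> fst f) (gE G), restrict (snd g \<circ> snd f) (gV G))"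

definition idm :: "ugraph \<Rightarrow> umor" where
  "idm G = (restrict id (gE G), restrict id (gV G))"

definition Mm :: "ugraph \<Rightarrow> ugraph \<Rightarrow> umor \<Rightarrow> bool" where
  "Mm G H f \<longleftrightarrow> f \<in> hom G H \<and> inj_on (fst f) (gE G) \<and> inj_on (snd f) (gV G)"

definition iso :: "ugraph \<Rightarrow> ugraph \<Rightarrow> umor \<Rightarrow> bool" where
  "iso G H f \<longleftrightarrow> f \<in> hom G H \<and> (\<exists>g\<in>hom H G. cmp G g f = idm G \<and> cmp H f g = idm H)"

definition epi :: "ugraph \<Rightarrow> ugraph \<Rightarrow> umor \<Rightarrow> bool" where
  "epi G H e \<longleftrightarrow> e \<in> hom G H \<and>
     (\<forall>K. \<forall>a\<in>hom H K. \<forall>b\<in>hom H K. cmp G a e = cmp G b e \<longrightarrow> a = b)"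

definition comm_sq :: "ugraph \<Rightarrow> ugraph \<Rightarrow> ugraph \<Rightarrow> ugraph \<Rightarrow> umor \<Rightarrow> umor \<Rightarrow> umor \<Rightarrow> umor \<Rightarrow> bool" where
  "comm_sq A B C D f g h k \<longleftrightarrow> f \<in> hom A B \<and> g \<in> hom A C \<and> h \<in> hom B D \<and> k \<in> hom C D \<and>
     cmp A h f = cmp A k g"

definition pushout :: "ugraph \<Rightarrow> ugraph \<Rightarrow> ugraph \<Rightarrow> ugraph \<Rightarrow> umor \<Rightarrow> umor \<Rightarrow> umor \<Rightarrow> umor \<Rightarrow> bool" where
  "pushout A B C D f g h k \<longleftrightarrow> comm_sq A B C D f g h k \<and>
     (\<forall>X x y. x \<in> hom B X \<longrightarrow> y \<in> hom C X \<longrightarrow> cmp A x f = cmp A y g \<longrightarrow>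
        (\<exists>!u. u \<in> hom D X \<and> cmp B u h = x \<and> cmp C u k = y))"

definition pullback :: "ugraph \<Rightarrow> ugraph \<Rightarrow> ugraph \<Rightarrow> ugraph \<Rightarrow> umor \<Rightarrow> umor \<Rightarrow> umor \<Rightarrow> umor \<Rightarrow> bool" where
  "pullback A B C D f g h k \<longleftrightarrow> comm_sq A B C D f g h k \<and>
     (\<forall>X x y. x \<in> hom X B \<longrightarrow> y \<in> hom X C \<longrightarrow> cmp X h x = cmp X k y \<longrightarrow>
        (\<exists>!u. u \<in> hom X A \<and> cmp X f u = x \<and> cmp X g u = y))"

definition M_VK :: "ugraph \<Rightarrow> ugraph \<Rightarrow> ugraph \<Rightarrow> ugraph \<Rightarrow> umor \<Rightarrow> umor \<Rightarrow> umor \<Rightarrow> umor \<Rightarrow> bool" where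
  "M_VK A B C D f g h k \<longleftrightarrow>
     (\<forall>A' B' C' D' f' g' h' k' a b c d.
        comm_sq A' B' C' D' f' g' h' k' \<and> a \<in> hom A' A \<and> Mm B' B b \<and> Mm C' C c \<and> Mm D' D d \<and>
        cmp A' b f' = cmp A' f a \<and> cmp A' c g' = cmp A' g a \<and>
        cmp B' d h' = cmp B' h b \<and> cmp C' d k' = cmp C' k c \<and>
        pullback A' B' A B f' a b f \<and> pullback A' C' A C g' a c g \<longrightarrow>
        (pushout A' B' C' D' f' g' h' k' \<longleftrightarrow>
           pullback B' D' B D h' b d h \<and> pullback C' D' C D k' c d k))"

definition M_adhesive :: bool where
  "M_adhesive \<longleftrightarrow>
     (\<forall>A B C f g. Mm A B f \<and> g \<in> hom A C \<longrightarrow> (\<exists>D h k. pushout A B C D f g h k)) \<and>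
     (\<forall>B C D h k. h \<in> hom B D \<and> Mm C D k \<longrightarrow> (\<exists>A f g. pullback A B C D f g h k)) \<and>
     (\<forall>A B f. iso A B f \<longrightarrow> Mm A B f) \<and>
     (\<forall>A B C f g. Mm A B f \<and> Mm B C g \<longrightarrow> Mm A C (cmp A g f)) \<and>
     (\<forall>A B C D f g h k. pushout A B C D f g h k \<and> Mm A B f \<longrightarrow> Mm C D k) \<and>
     (\<forall>A B C D f g h k. pullback A B C D f g h k \<and> Mm C D k \<longrightarrow> Mm A B f) \<and>
     (\<forall>A B C D f g h k. pushout A B C D f g h k \<and> Mm A B f \<longrightarrow> M_VK A B C D f g h k)"

definition finitary :: bool where
  "finitary \<longleftrightarrow> (\<forall>X. ug X \<longrightarrow>
     (\<exists>S. finite S \<and> (\<forall>(Y, m)\<in>S. Mm Y X m) \<and>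
        (\<forall>Y m. Mm Y X m \<longrightarrow> (\<exists>(Y', m')\<in>S. \<exists>i. iso Y Y' i \<and> cmp Y m' i = m))))"

definition M_initial :: bool where
  "M_initial \<longleftrightarrow> (\<exists>I. ug I \<and> (\<forall>X. ug X \<longrightarrow> (\<exists>!m. Mm I X m)))"

definition M_effective_unions :: bool where
  "M_effective_unions \<longleftrightarrow>
     (\<forall>A B C D E m1 m2 n1 n2 e1 e2 u.
        Mm A B m1 \<and> Mm A C m2 \<and> Mm B D n1 \<and> Mm C D n2 \<and> pushout A B C D m1 m2 n1 n2 \<and>
        Mm B E e1 \<and> Mm C E e2 \<and> pullback A B C E m1 m2 e1 e2 \<and>
        u \<in> hom D E \<and> cmp B u n1 = e1 \<and> cmp C u n2 = e2 \<longrightarrow> Mm D E u)"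

definition epi_M_factorization :: bool where
  "epi_M_factorization \<longleftrightarrow> (\<forall>A B f. f \<in> hom A B \<longrightarrow>
     (\<exists>K e m. epi A K e \<and> Mm K B m \<and> cmp A m e = f) \<and>
     (\<forall>K e m K' e' m'. epi A K e \<and> Mm K B m \<and> cmp A m e = f \<and>
         epi A K' e' \<and> Mm K' B m' \<and> cmp A m' e' = f \<longrightarrow>
         (\<exists>i. iso K K' i \<and> cmp A i e = e' \<and> cmp K m' i = m)))"

definition FPC :: "ugraph \<Rightarrow> ugraph \<Rightarrow> ugraph \<Rightarrow> ugraph \<Rightarrow> umor \<Rightarrow> umor \<Rightarrow> umor \<Rightarrow> umor \<Rightarrow> bool" where
  "FPC A B C D a b c d \<longleftrightarrow> pullback A B C D a d b c \<and>
     (\<forall>A' C' p q r. p \<in> hom A' A \<and> r \<in> hom C' D \<and> pullback A' B C' D (cmp A' a p) q b r \<longrightarrow>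
        (\<exists>!s. s \<in> hom C' C \<and> cmp C' c s = r \<and> cmp A' s q = cmp A' d p))"

definition FPCs_of_M_exist :: bool where
  "FPCs_of_M_exist \<longleftrightarrow> (\<forall>A B D a b. Mm A B a \<and> Mm B D b \<longrightarrow> (\<exists>C c d. FPC A B C D a b c d))"

definition M_stable_under_FPC :: bool where
  "M_stable_under_FPC \<longleftrightarrow> (\<forall>A B C D a b c d. Mm A B a \<and> Mm B D b \<and> FPC A B C D a b c d \<longrightarrow>
     Mm C D c \<and> Mm A C d)"

end

theory Submission
  imports Defs
begin
lemma hom_iff: "f \<in> hom G H \<longleftrightarrow> ug G \<and> ug H \<and> fst f \<in> gE G \<rightarrow>\<^sub>E gE H \<and> snd f \<in> gV G \<rightarrow>\<^sub>E gV H \<and>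
      (\<forall>e\<in>gE G. gi H (fst f e) = snd f ` gi G e)"
  by (cases f) (simp add: hom_def)

lemma homD:
  assumes "f \<in> hom G H"
  shows "ug G" "ug H" "fst f \<in> gE G \<rightarrow>\<^sub>E gE H" "snd f \<in> gV G \<rightarrow>\<^sub>E gV H"
    "\<And>e. e \<in> gE G \<Longrightarrow> gi H (fst f e) = snd f ` gi G e"
    "\<And>e. e \<in> gE G \<Longrightarrow> fst f e \<in> gE H" "\<And>v. v \<in> gV G \<Longrightarrow> snd f v \<in> gV H"
  using assms unfolding hom_iff by auto

lemma ugD:
  assumes "ug G"
  shows "finite (gE G)" "finite (gV G)" "gi G \<in> gE G \<rightarrow>\<^sub>E P12 (gV G)"
    "\<And>e. e \<in> gE G \<Longrightarrow> gi G e \<subseteq> gV G"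
    "\<And>e. e \<in> gE G \<Longrightarrow> gi G e \<noteq> {}"
    "\<And>e. e \<in> gE G \<Longrightarrow> gi G e \<in> P12 (gV G)"
proof -
  show "finite (gE G)" "finite (gV G)" "gi G \<in> gE G \<rightarrow>\<^sub>E P12 (gV G)" using assms unfolding ug_def by auto
  fix e assume e: "e \<in> gE G"
  then show p: "gi G e \<in> P12 (gV G)" using assms unfolding ug_def by auto
  then show "gi G e \<subseteq> gV G" unfolding P12_def by auto
  show "gi G e \<noteq> {}" using p unfolding P12_def by auto
qed

lemma gsel[simp]: "gE (E, V, i) = E" "gV (E, V, i) = V" "gi (E, V, i) = i"
  by (simp_all add: gE_def gV_def gi_def)

lemma P12_mono: "S \<in> P12 X \<Longrightarrow> S \<subseteq> Y \<Longrightarrow> S \<in> P12 Y"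
  unfolding P12_def by auto

lemma P12_image: "S \<in> P12 X \<Longrightarrow> f ` S \<subseteq> Y \<Longrightarrow> f ` S \<in> P12 Y"
proof -
  assume a: "S \<in> P12 X" "f ` S \<subseteq> Y"
  then have fin: "finite S" "S \<noteq> {}" "card S \<le> 2" unfolding P12_def
    by (auto intro: card_ge_0_finite)
  have "card (f ` S) \<le> 2" using card_image_le[OF fin(1), of f] fin(3) by linarith
  moreover have "1 \<le> card (f ` S)" using fin by (simp add: Suc_leI card_gt_0_iff)
  ultimately show ?thesis using a(2) unfolding P12_def by auto
qed

lemma mor_eqI:
  assumes "f \<in> hom G H" "g \<in> hom G H'"
    "\<And>e. e \<in> gE G \<Longrightarrow> fst f e = fst g e" "\<And>v. v \<in> gV G \<Longrightarrow> snd f v = snd g v"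
  shows "f = g"
proof -
  have "fst f = fst g"
    by (rule extensionalityI[of _ "gE G"]) (use assms homD[OF assms(1)] homD[OF assms(2)] in \<open>auto simp: PiE_def\<close>)
  moreover have "snd f = snd g"
    by (rule extensionalityI[of _ "gV G"]) (use assms homD[OF assms(1)] homD[OF assms(2)] in \<open>auto simp: PiE_def\<close>)
  ultimately show ?thesis by (simp add: prod_eq_iff)
qed

lemma cmp_fst[simp]: "fst (cmp G g f) = restrict (fst g \<circ> fst f) (gE G)"
  and cmp_snd[simp]: "snd (cmp G g f) = restrict (snd g \<circ> snd f) (gV G)"
  by (simp_all add: cmp_def)

lemma idm_fst[simp]: "fst (idm G) = restrict id (gE G)"
  and idm_snd[simp]: "snd (idm G) = restrict id (gV G)"
  by (simp_all add: idm_def)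

lemma cmp_hom: assumes "f \<in> hom A B" "g \<in> hom B C" shows "cmp A g f \<in> hom A C"
proof -
  have "gi C (fst (cmp A g f) e) = snd (cmp A g f) ` gi A e" if e: "e \<in> gE A" for e
  proof -
    have s: "gi A e \<subseteq> gV A" using ugD(4)[OF homD(1)[OF assms(1)] e] .
    have "gi C (fst (cmp A g f) e) = snd g ` gi B (fst f e)" using e homD[OF assms(1)] homD[OF assms(2)] by simp
    also have "\<dots> = snd g ` snd f ` gi A e" using e homD[OF assms(1)] by simp
    also have "\<dots> = snd (cmp A g f) ` gi A e" using s by (auto simp: image_iff)
    finally show ?thesis .
  qed
  then show ?thesis using homD[OF assms(1)] homD[OF assms(2)] unfolding hom_iff by (auto simp: PiE_def Pi_def)
qed

lemma idm_hom: "ug G \<Longrightarrow> idm G \<in> hom G G"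
  unfolding hom_iff by (auto simp: PiE_def Pi_def dest: ugD(4))

lemma cmp_idm_r: "f \<in> hom A B \<Longrightarrow> cmp A f (idm A) = f"
  by (rule mor_eqI[OF cmp_hom[OF idm_hom[OF homD(1)]]]) auto

lemma cmp_idm_l: "f \<in> hom A B \<Longrightarrow> cmp A (idm B) f = f"
  by (rule mor_eqI[OF cmp_hom[OF _ idm_hom[OF homD(2)]]]) (auto dest: homD)

lemma cmp_assoc: "f \<in> hom A B \<Longrightarrow> cmp A h (cmp A g f) = cmp A (cmp B h g) f"
  by (auto simp: cmp_def fun_eq_iff dest: homD)

lemma cmp_eqD:
  assumes "cmp G g f = cmp G g' f'"
  shows "\<And>x. x \<in> gE G \<Longrightarrow> fst g (fst f x) = fst g' (fst f' x)"
    "\<And>x. x \<in> gV G \<Longrightarrow> snd g (snd f x) = snd g' (snd f' x)"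
proof -
  fix x assume "x \<in> gE G"
  then show "fst g (fst f x) = fst g' (fst f' x)"
    using arg_cong[OF assms, of "\<lambda>m. fst m x"] by simp
next
  fix x assume "x \<in> gV G"
  then show "snd g (snd f x) = snd g' (snd f' x)"
    using arg_cong[OF assms, of "\<lambda>m. snd m x"] by simp
qed

lemma cmp_eqI:
  assumes "\<And>x. x \<in> gE G \<Longrightarrow> fst g (fst f x) = fst g' (fst f' x)"
    "\<And>x. x \<in> gV G \<Longrightarrow> snd g (snd f x) = snd g' (snd f' x)"
  shows "cmp G g f = cmp G g' f'"
  using assms by (auto simp: cmp_def fun_eq_iff)

lemma cmp_eq_mor:
  assumes "f \<in> hom A B" "x \<in> hom A X"
  shows "cmp A u f = x \<longleftrightarrow> (\<forall>e\<in>gE A. fst u (fst f e) = fst x e) \<and> (\<forall>v\<in>gV A. snd u (snd f v) = snd x v)"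
proof
  assume "cmp A u f = x"
  then show "(\<forall>e\<in>gE A. fst u (fst f e) = fst x e) \<and> (\<forall>v\<in>gV A. snd u (snd f v) = snd x v)"
    by auto
next
  assume h: "(\<forall>e\<in>gE A. fst u (fst f e) = fst x e) \<and> (\<forall>v\<in>gV A. snd u (snd f v) = snd x v)"
  have "fst (cmp A u f) = fst x"
    by (rule extensionalityI[of _ "gE A"]) (use h homD(3)[OF assms(2)] in \<open>auto simp: PiE_def\<close>)
  moreover have "snd (cmp A u f) = snd x"
    by (rule extensionalityI[of _ "gV A"]) (use h homD(4)[OF assms(2)] in \<open>auto simp: PiE_def\<close>)
  ultimately show "cmp A u f = x" by (simp add: prod_eq_iff)
qed

lemma MmD: "Mm G H f \<Longrightarrow> f \<in> hom G H" "Mm G H f \<Longrightarrow> inj_on (fst f) (gE G)"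
  "Mm G H f \<Longrightarrow> inj_on (snd f) (gV G)"
  by (simp_all add: Mm_def)

lemma pullback_swap: "pullback A B C D f g h k \<Longrightarrow> pullback A C B D g f k h"
  unfolding pullback_def comm_sq_def by metis

definition spo :: "nat set \<Rightarrow> nat set \<Rightarrow> nat set \<Rightarrow> nat set \<Rightarrow> (nat\<Rightarrow>nat) \<Rightarrow> (nat\<Rightarrow>nat) \<Rightarrow> (nat\<Rightarrow>nat) \<Rightarrow> bool" where
  "spo A B C D f h k \<longleftrightarrow> inj_on k C \<and> inj_on h (B - f`A) \<and> h`(B - f`A) \<inter> k`C = {} \<and> h`B \<union> k`C = D"

definition POc :: "ugraph \<Rightarrow> ugraph \<Rightarrow> ugraph \<Rightarrow> ugraph \<Rightarrow> umor \<Rightarrow> umor \<Rightarrow> umor \<Rightarrow> bool" where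
  "POc A B C D f h k \<longleftrightarrow> spo (gE A) (gE B) (gE C) (gE D) (fst f) (fst h) (fst k) \<and>
     spo (gV A) (gV B) (gV C) (gV D) (snd f) (snd h) (snd k)"

definition medf :: "nat set \<Rightarrow> nat set \<Rightarrow> nat set \<Rightarrow> nat set \<Rightarrow> (nat\<Rightarrow>nat) \<Rightarrow> (nat\<Rightarrow>nat) \<Rightarrow> (nat\<Rightarrow>nat) \<Rightarrow> (nat\<Rightarrow>nat) \<Rightarrow> (nat\<Rightarrow>nat) \<Rightarrow> nat \<Rightarrow> nat" where
  "medf A B C D f h k x y = restrict (\<lambda>z. if z \<in> k`C then y (inv_into C k z) else x (inv_into (B - f`A) h z)) D"

lemma spo_med:
  assumes "spo A B C D f h k" "\<forall>a\<in>A. h (f a) = k (g a)" "g`A \<subseteq> C"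
    "\<forall>a\<in>A. x (f a) = y (g a)"
  shows "\<forall>b\<in>B. medf A B C D f h k x y (h b) = x b" "\<forall>c\<in>C. medf A B C D f h k x y (k c) = y c"
proof -
  note s = assms(1)[unfolded spo_def]
  show "\<forall>b\<in>B. medf A B C D f h k x y (h b) = x b"
  proof
    fix b assume b: "b \<in> B"
    then have hD: "h b \<in> D" using s by auto
    show "medf A B C D f h k x y (h b) = x b"
    proof (cases "b \<in> f`A")
      case True
      then obtain a where a: "a \<in> A" "b = f a" by auto
      then have "h b = k (g a)" using assms(2) by auto
      moreover have "g a \<in> C" using a assms(3) by auto
      ultimately show ?thesis using hD a assms(4) s by (auto simp: medf_def inv_into_f_f)
    next
      case False
      then have "h b \<notin> k`C" using s b by auto
      then show ?thesis using hD False b s by (auto simp: medf_def inv_into_f_f)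
    qed
  qed
  show "\<forall>c\<in>C. medf A B C D f h k x y (k c) = y c"
    using s by (auto simp: medf_def inv_into_f_f)
qed

lemma spo_med_uniq:
  assumes "spo A B C D f h k" "u' \<in> extensional D" "\<forall>b\<in>B. u' (h b) = x b" "\<forall>c\<in>C. u' (k c) = y c"
    "\<forall>b\<in>B. u (h b) = x b" "\<forall>c\<in>C. u (k c) = y c" "u \<in> extensional D"
  shows "u' = u"
proof (rule extensionalityI[OF assms(2) assms(7)])
  fix z assume "z \<in> D"
  then have "z \<in> h`B \<union> k`C" using assms(1) unfolding spo_def by auto
  then show "u' z = u z" using assms by auto
qed

lemma spo_med_fun:
  assumes "spo A B C D f h k" "\<forall>b\<in>B. u (h b) = x b" "\<forall>c\<in>C. u (k c) = y c"
    "x \<in> B \<rightarrow> X" "y \<in> C \<rightarrow> X"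
  shows "\<forall>z\<in>D. u z \<in> X"
proof
  fix z assume "z \<in> D"
  then have "z \<in> h`B \<union> k`C" using assms(1) unfolding spo_def by auto
  then show "u z \<in> X" using assms by auto
qed

lemma po_intro:
  assumes cs: "comm_sq A B C D f g h k" and pc: "POc A B C D f h k"
  shows "pushout A B C D f g h k"
  unfolding pushout_def
proof (intro conjI allI impI)
  show "comm_sq A B C D f g h k" by fact
  fix X x y assume x: "x \<in> hom B X" and y: "y \<in> hom C X" and xy: "cmp A x f = cmp A y g"
  have f: "f \<in> hom A B" and g: "g \<in> hom A C" and h: "h \<in> hom B D" and k: "k \<in> hom C D"
    and hk: "cmp A h f = cmp A k g" using cs unfolding comm_sq_def by auto
  note sE = pc[unfolded POc_def, THEN conjunct1] and sV = pc[unfolded POc_def, THEN conjunct2]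
  define uE where "uE = medf (gE A) (gE B) (gE C) (gE D) (fst f) (fst h) (fst k) (fst x) (fst y)"
  define uV where "uV = medf (gV A) (gV B) (gV C) (gV D) (snd f) (snd h) (snd k) (snd x) (snd y)"
  have gsE: "fst g ` gE A \<subseteq> gE C" and gsV: "snd g ` gV A \<subseteq> gV C" using homD[OF g] by auto
  have mE: "\<forall>b\<in>gE B. uE (fst h b) = fst x b" "\<forall>c\<in>gE C. uE (fst k c) = fst y c"
    using spo_med[OF sE _ gsE] cmp_eqD(1)[OF hk] cmp_eqD(1)[OF xy] unfolding uE_def by auto
  have mV: "\<forall>b\<in>gV B. uV (snd h b) = snd x b" "\<forall>c\<in>gV C. uV (snd k c) = snd y c"
    using spo_med[OF sV _ gsV] cmp_eqD(2)[OF hk] cmp_eqD(2)[OF xy] unfolding uV_def by auto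
  have extE: "uE \<in> extensional (gE D)" and extV: "uV \<in> extensional (gV D)"
    unfolding uE_def uV_def medf_def by auto
  have fE: "\<forall>z\<in>gE D. uE z \<in> gE X"
    by (rule spo_med_fun[OF sE mE]) (use homD[OF x] homD[OF y] in auto)
  have fV: "\<forall>z\<in>gV D. uV z \<in> gV X"
    by (rule spo_med_fun[OF sV mV]) (use homD[OF x] homD[OF y] in auto)
  have inc: "gi X (uE e) = uV ` gi D e" if e: "e \<in> gE D" for e
  proof -
    have "e \<in> fst h ` gE B \<union> fst k ` gE C" using e sE unfolding spo_def by auto
    then show ?thesis
    proof
      assume "e \<in> fst h ` gE B"
      then obtain b where b: "b \<in> gE B" "e = fst h b" by auto
      have "gi B b \<subseteq> gV B" using ugD(4)[OF homD(1)[OF h] b(1)] .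
      then have "uV ` snd h ` gi B b = snd x ` gi B b" using mV by (force simp: image_iff)
      then show ?thesis using b mE homD(5)[OF h b(1)] homD(5)[OF x b(1)] by (simp add: image_image)
    next
      assume "e \<in> fst k ` gE C"
      then obtain b where b: "b \<in> gE C" "e = fst k b" by auto
      have "gi C b \<subseteq> gV C" using ugD(4)[OF homD(1)[OF k] b(1)] .
      then have "uV ` snd k ` gi C b = snd y ` gi C b" using mV by (force simp: image_iff)
      then show ?thesis using b mE homD(5)[OF k b(1)] homD(5)[OF y b(1)] by (simp add: image_image)
    qed
  qed
  have uh: "(uE, uV) \<in> hom D X"
    unfolding hom_iff using homD(2)[OF h] homD(2)[OF x] extE extV fE fV inc by (auto simp: PiE_def Pi_def)
  show "\<exists>!u. u \<in> hom D X \<and> cmp B u h = x \<and> cmp C u k = y"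
  proof (rule ex1I[of _ "(uE, uV)"])
    show "(uE, uV) \<in> hom D X \<and> cmp B (uE, uV) h = x \<and> cmp C (uE, uV) k = y"
      using uh mE mV cmp_eq_mor[OF h x] cmp_eq_mor[OF k y] by auto
  next
    fix u assume u: "u \<in> hom D X \<and> cmp B u h = x \<and> cmp C u k = y"
    then have "(\<forall>e\<in>gE B. fst u (fst h e) = fst x e) \<and> (\<forall>v\<in>gV B. snd u (snd h v) = snd x v)"
      "(\<forall>e\<in>gE C. fst u (fst k e) = fst y e) \<and> (\<forall>v\<in>gV C. snd u (snd k v) = snd y v)"
      using cmp_eq_mor[OF h x] cmp_eq_mor[OF k y] by auto
    moreover have "fst u \<in> extensional (gE D)" "snd u \<in> extensional (gV D)"
      using homD(3,4)[of u D X] u by (auto simp: PiE_def)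
    ultimately have "fst u = uE" "snd u = uV"
      using spo_med_uniq[OF sE _ _ _ mE extE] spo_med_uniq[OF sV _ _ _ mV extV] by auto
    then show "u = (uE, uV)" by (simp add: prod_eq_iff)
  qed
qed

definition poh :: "nat set \<Rightarrow> (nat\<Rightarrow>nat) \<Rightarrow> (nat\<Rightarrow>nat) \<Rightarrow> nat set \<Rightarrow> nat \<Rightarrow> nat" where
  "poh A f g B = restrict (\<lambda>x. if x \<in> f`A then 2 * g (inv_into A f x) else 2*x+1) B"
definition pok :: "nat set \<Rightarrow> nat \<Rightarrow> nat" where
  "pok C = restrict (\<lambda>y. 2*y) C"
definition pos :: "nat set \<Rightarrow> (nat\<Rightarrow>nat) \<Rightarrow> nat set \<Rightarrow> nat set \<Rightarrow> nat set" where
  "pos A f B C = (\<lambda>y. 2*y)`C \<union> (\<lambda>x. 2*x+1)`(B - f`A)"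

lemma poh_in: "inj_on f A \<Longrightarrow> a \<in> A \<Longrightarrow> f`A \<subseteq> B \<Longrightarrow> poh A f g B (f a) = 2 * g a"
proof -
  assume a: "inj_on f A" "a \<in> A" "f`A \<subseteq> B"
  have "f a \<in> B" "f a \<in> f`A" using a by auto
  moreover have "inv_into A f (f a) = a" using inv_into_f_f[OF a(1,2)] .
  ultimately show ?thesis unfolding poh_def by simp
qed

lemma poh_out: "x \<in> B \<Longrightarrow> x \<notin> f`A \<Longrightarrow> poh A f g B x = 2*x+1"
  unfolding poh_def by simp

lemma spo_concrete:
  assumes "inj_on f A" "f`A \<subseteq> B" "g`A \<subseteq> C"
  shows "spo A B C (pos A f B C) f (poh A f g B) (pok C)"
    "poh A f g B \<in> B \<rightarrow>\<^sub>E pos A f B C" "pok C \<in> C \<rightarrow>\<^sub>E pos A f B C"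
    "\<forall>a\<in>A. poh A f g B (f a) = pok C (g a)"
proof -
  show c: "\<forall>a\<in>A. poh A f g B (f a) = pok C (g a)"
  proof
    fix a assume a: "a \<in> A"
    have "f a \<in> B" "g a \<in> C" "f a \<in> f`A" using a assms by auto
    moreover have "inv_into A f (f a) = a" using inv_into_f_f[OF assms(1) a] .
    ultimately show "poh A f g B (f a) = pok C (g a)" unfolding poh_def pok_def by simp
  qed
  show "poh A f g B \<in> B \<rightarrow>\<^sub>E pos A f B C"
    using assms by (auto simp: poh_def pos_def PiE_def Pi_def)
  show "pok C \<in> C \<rightarrow>\<^sub>E pos A f B C"
    by (auto simp: pok_def pos_def PiE_def Pi_def)
  have i1: "inj_on (pok C) C" by (auto simp: pok_def inj_on_def)
  have i2: "inj_on (poh A f g B) (B - f`A)" by (auto simp: poh_def inj_on_def)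
  have d: "poh A f g B ` (B - f`A) \<inter> pok C ` C = {}"
  proof -
    have False if "x \<in> B - f`A" "y \<in> C" "poh A f g B x = pok C y" for x y
    proof -
      have "2*x+1 = 2*y" using that by (simp add: poh_def pok_def)
      then show False by presburger
    qed
    then show ?thesis by blast
  qed
  have s: "poh A f g B ` B \<union> pok C ` C = pos A f B C"
  proof
    show "poh A f g B ` B \<union> pok C ` C \<subseteq> pos A f B C"
      using assms by (auto simp: poh_def pok_def pos_def)
    show "pos A f B C \<subseteq> poh A f g B ` B \<union> pok C ` C"
    proof
      fix z assume "z \<in> pos A f B C"
      then show "z \<in> poh A f g B ` B \<union> pok C ` C"
        unfolding pos_def
      proof
        assume "z \<in> (\<lambda>y. 2*y) ` C" then show ?thesis by (auto simp: pok_def)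
      next
        assume "z \<in> (\<lambda>x. 2*x+1) ` (B - f`A)"
        then obtain x where "x \<in> B" "x \<notin> f`A" "z = 2*x+1" by auto
        then have "z = poh A f g B x" by (simp add: poh_def)
        then show ?thesis using \<open>x \<in> B\<close> by auto
      qed
    qed
  qed
  show "spo A B C (pos A f B C) f (poh A f g B) (pok C)"
    unfolding spo_def using i1 i2 d s by auto
qed

definition po_obj :: "ugraph \<Rightarrow> ugraph \<Rightarrow> ugraph \<Rightarrow> umor \<Rightarrow> umor \<Rightarrow> ugraph" where
  "po_obj A B C f g = (pos (gE A) (fst f) (gE B) (gE C), pos (gV A) (snd f) (gV B) (gV C),
     restrict (\<lambda>n. if even n then (\<lambda>y. 2*y) ` gi C (n div 2) else poh (gV A) (snd f) (snd g) (gV B) ` gi B (n div 2))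
       (pos (gE A) (fst f) (gE B) (gE C)))"
definition po_h :: "ugraph \<Rightarrow> ugraph \<Rightarrow> umor \<Rightarrow> umor \<Rightarrow> umor" where
  "po_h A B f g = (poh (gE A) (fst f) (fst g) (gE B), poh (gV A) (snd f) (snd g) (gV B))"
definition po_k :: "ugraph \<Rightarrow> umor" where
  "po_k C = (pok (gE C), pok (gV C))"

lemma po_concrete:
  assumes f: "Mm A B f" and g: "g \<in> hom A C"
  shows "comm_sq A B C (po_obj A B C f g) f g (po_h A B f g) (po_k C)"
    "POc A B C (po_obj A B C f g) f (po_h A B f g) (po_k C)"
proof -
  have fh: "f \<in> hom A B" using f by (simp add: Mm_def)
  let ?D = "po_obj A B C f g"
  have fsE: "fst f ` gE A \<subseteq> gE B" and fsV: "snd f ` gV A \<subseteq> gV B" using homD[OF fh] by auto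
  have gsE: "fst g ` gE A \<subseteq> gE C" and gsV: "snd g ` gV A \<subseteq> gV C" using homD[OF g] by auto
  note cE = spo_concrete[OF MmD(2)[OF f] fsE gsE]
  note cV = spo_concrete[OF MmD(3)[OF f] fsV gsV]
  have uA: "ug A" and uB: "ug B" and uC: "ug C" using homD[OF fh] homD[OF g] by auto
  let ?hV = "poh (gV A) (snd f) (snd g) (gV B)"
  have hVin: "\<And>v. v \<in> gV B \<Longrightarrow> ?hV v \<in> gV ?D" using cV(2) by (auto simp: po_obj_def)
  have ugD0: "ug ?D"
  proof -
    have fin: "finite (gE ?D)" "finite (gV ?D)" using ugD(1,2)[OF uB] ugD(1,2)[OF uC]
      by (auto simp: po_obj_def pos_def)
    have "gi ?D n \<in> P12 (gV ?D)" if n: "n \<in> gE ?D" for n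
    proof -
      from n have "n \<in> (\<lambda>y. 2*y)`gE C \<or> n \<in> (\<lambda>x. 2*x+1)`(gE B - fst f ` gE A)"
        by (simp add: po_obj_def pos_def)
      then show ?thesis
      proof
        assume "n \<in> (\<lambda>y. 2*y)`gE C"
        then obtain y where y: "y \<in> gE C" "n = 2*y" by auto
        have "gi ?D n = (\<lambda>y. 2*y) ` gi C y" using y n by (simp add: po_obj_def)
        moreover have "(\<lambda>y. 2*y) ` gi C y \<subseteq> gV ?D" using ugD(4)[OF uC y(1)]
          by (auto simp: po_obj_def pos_def)
        ultimately show ?thesis using P12_image[OF ugD(6)[OF uC y(1)]] by simp
      next
        assume "n \<in> (\<lambda>x. 2*x+1)`(gE B - fst f ` gE A)"
        then obtain y where y: "y \<in> gE B" "n = 2*y+1" by auto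
        have "gi ?D n = ?hV ` gi B y" using y n by (simp add: po_obj_def)
        moreover have "?hV ` gi B y \<subseteq> gV ?D" using ugD(4)[OF uB y(1)] hVin by auto
        ultimately show ?thesis using P12_image[OF ugD(6)[OF uB y(1)]] by simp
      qed
    qed
    moreover have "gi ?D \<in> extensional (gE ?D)" by (simp add: po_obj_def)
    ultimately show ?thesis using fin unfolding ug_def by (auto simp: PiE_def)
  qed
  have hhom: "po_h A B f g \<in> hom B ?D"
    unfolding hom_iff
  proof (intro conjI ballI)
    show "fst (po_h A B f g) \<in> gE B \<rightarrow>\<^sub>E gE ?D" using cE(2) by (simp add: po_h_def po_obj_def)
    show "snd (po_h A B f g) \<in> gV B \<rightarrow>\<^sub>E gV ?D" using cV(2) by (simp add: po_h_def po_obj_def)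
    fix e assume e: "e \<in> gE B"
    have he: "fst (po_h A B f g) e \<in> gE ?D" using cE(2) e by (auto simp: po_h_def po_obj_def)
    show "gi ?D (fst (po_h A B f g) e) = snd (po_h A B f g) ` gi B e"
    proof (cases "e \<in> fst f ` gE A")
      case True
      then obtain a where a: "a \<in> gE A" "e = fst f a" by auto
      have ev: "fst (po_h A B f g) e = 2 * fst g a" using poh_in[OF MmD(2)[OF f] a(1) fsE] a(2)
        by (simp add: po_h_def)
      have sub: "gi A a \<subseteq> gV A" using ugD(4)[OF uA a(1)] .
      have "gi ?D (fst (po_h A B f g) e) = (\<lambda>y. 2*y) ` gi C (fst g a)"
        using he ev by (simp add: po_obj_def)
      also have "\<dots> = (\<lambda>y. 2*y) ` snd g ` gi A a" using homD(5)[OF g a(1)] by simp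
      also have "\<dots> = ?hV ` snd f ` gi A a"
      proof -
        have "\<forall>v\<in>gi A a. ?hV (snd f v) = 2 * snd g v" using sub poh_in[OF MmD(3)[OF f] _ fsV] by blast
        then show ?thesis by (simp add: image_image)
      qed
      also have "\<dots> = snd (po_h A B f g) ` gi B e" using homD(5)[OF fh a(1)] a by (simp add: po_h_def)
      finally show ?thesis .
    next
      case False
      then have ev: "fst (po_h A B f g) e = 2 * e + 1" using e poh_out by (simp add: po_h_def)
      then show ?thesis using he by (simp add: po_obj_def po_h_def)
    qed
  qed (use uB ugD0 in auto)
  have khom: "po_k C \<in> hom C ?D"
    unfolding hom_iff
  proof (intro conjI ballI)
    show "fst (po_k C) \<in> gE C \<rightarrow>\<^sub>E gE ?D" using cE(3) by (simp add: po_k_def po_obj_def)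
    show "snd (po_k C) \<in> gV C \<rightarrow>\<^sub>E gV ?D" using cV(3) by (simp add: po_k_def po_obj_def)
    fix e assume e: "e \<in> gE C"
    have he: "fst (po_k C) e \<in> gE ?D" using cE(3) e by (auto simp: po_k_def po_obj_def)
    have "gi ?D (fst (po_k C) e) = (\<lambda>y. 2*y) ` gi C e" using he e by (simp add: po_obj_def po_k_def pok_def)
    also have "\<dots> = snd (po_k C) ` gi C e" using ugD(4)[OF uC e] by (force simp: po_k_def pok_def image_iff)
    finally show "gi ?D (fst (po_k C) e) = snd (po_k C) ` gi C e" .
  qed (use uC ugD0 in auto)
  have "cmp A (po_h A B f g) f = cmp A (po_k C) g"
    by (rule cmp_eqI) (use cE(4) cV(4) in \<open>auto simp: po_h_def po_k_def\<close>)
  then show "comm_sq A B C ?D f g (po_h A B f g) (po_k C)"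
    unfolding comm_sq_def using fh g hhom khom by auto
  show "POc A B C ?D f (po_h A B f g) (po_k C)"
    unfolding POc_def using cE(1) cV(1) by (simp add: po_h_def po_k_def po_obj_def)
qed

lemma po_exists: "Mm A B f \<Longrightarrow> g \<in> hom A C \<Longrightarrow> \<exists>D h k. pushout A B C D f g h k"
  using po_intro[OF po_concrete(1) po_concrete(2)] by blast

lemma spo_transfer:
  assumes "spo A B C D0 f h0 k0" "\<forall>b\<in>B. w (h b) = h0 b" "\<forall>c\<in>C. w (k c) = k0 c"
    "\<forall>z\<in>D. u (w z) = z" "\<forall>z\<in>D. w z \<in> D0" "\<forall>b\<in>B. u (h0 b) = h b" "\<forall>c\<in>C. u (k0 c) = k c"
    "h`B \<subseteq> D" "k`C \<subseteq> D"
  shows "spo A B C D f h k"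
proof -
  have s1: "inj_on k0 C" and s2: "inj_on h0 (B - f`A)" and s3: "h0`(B - f`A) \<inter> k0`C = {}"
    and s4: "h0`B \<union> k0`C = D0"
    using assms(1) unfolding spo_def by auto
  have "inj_on k C"
  proof (rule inj_onI)
    fix x y assume xy: "x \<in> C" "y \<in> C" "k x = k y"
    then have "k0 x = k0 y" using assms(3) by metis
    then show "x = y" using inj_onD[OF s1 _ xy(1,2)] by blast
  qed
  moreover have "inj_on h (B - f`A)"
  proof (rule inj_onI)
    fix x y assume xy: "x \<in> B - f`A" "y \<in> B - f`A" "h x = h y"
    then have "h0 x = h0 y" using assms(2) by (metis DiffD1)
    then show "x = y" using inj_onD[OF s2 _ xy(1,2)] by blast
  qed
  moreover have "h`(B - f`A) \<inter> k`C = {}"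
  proof -
    have False if xy: "x \<in> B - f`A" "y \<in> C" "h x = k y" for x y
    proof -
      have "h0 x = k0 y" using xy assms(2,3) by (metis DiffD1)
      then have "h0 x \<in> h0`(B - f`A) \<inter> k0`C" using xy(1,2) by (metis IntI imageI)
      then show False using s3 by simp
    qed
    then show ?thesis by blast
  qed
  moreover have "D \<subseteq> h`B \<union> k`C"
  proof
    fix z assume z: "z \<in> D"
    then have "w z \<in> h0`B \<union> k0`C" using s4 assms(5) by simp
    then show "z \<in> h`B \<union> k`C"
    proof
      assume "w z \<in> h0`B"
      then obtain b where b: "b \<in> B" "w z = h0 b" by auto
      then have "z = h b" using assms(4,6) z by metis
      then show ?thesis using b by auto
    next
      assume "w z \<in> k0`C"
      then obtain b where b: "b \<in> C" "w z = k0 b" by auto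
      then have "z = k b" using assms(4,7) z by metis
      then show ?thesis using b by auto
    qed
  qed
  ultimately show ?thesis unfolding spo_def using assms(8,9) by auto
qed

lemma po_elim:
  assumes po: "pushout A B C D f g h k" and f: "Mm A B f"
  shows "POc A B C D f h k"
proof -
  have cs: "comm_sq A B C D f g h k" using po by (simp add: pushout_def)
  have fh: "f \<in> hom A B" and g: "g \<in> hom A C" and h: "h \<in> hom B D" and k: "k \<in> hom C D"
    and hk: "cmp A h f = cmp A k g" using cs unfolding comm_sq_def by auto
  let ?D = "po_obj A B C f g" and ?h = "po_h A B f g" and ?k = "po_k C"
  note cs0 = po_concrete(1)[OF f g] and pc0 = po_concrete(2)[OF f g]
  have po0: "pushout A B C ?D f g ?h ?k" by (rule po_intro[OF cs0 pc0])
  have h0: "?h \<in> hom B ?D" and k0: "?k \<in> hom C ?D" and hk0: "cmp A ?h f = cmp A ?k g"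
    using cs0 unfolding comm_sq_def by auto
  obtain w where w: "w \<in> hom D ?D" "cmp B w h = ?h" "cmp C w k = ?k"
    using po h0 k0 hk0 unfolding pushout_def by blast
  obtain u where u: "u \<in> hom ?D D" "cmp B u ?h = h" "cmp C u ?k = k"
    using po0 h k hk unfolding pushout_def by blast
  have uw: "cmp D u w \<in> hom D D" using cmp_hom[OF w(1) u(1)] .
  have "cmp B (cmp D u w) h = h" using cmp_assoc[OF h, of u w] w(2) u(2) by simp
  moreover have "cmp C (cmp D u w) k = k" using cmp_assoc[OF k, of u w] w(3) u(3) by simp
  moreover have "cmp B (idm D) h = h" "cmp C (idm D) k = k" using cmp_idm_l[OF h] cmp_idm_l[OF k] by auto
  moreover have "idm D \<in> hom D D" using idm_hom[OF homD(2)[OF h]] .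
  ultimately have id: "cmp D u w = idm D"
    using po h k hk uw unfolding pushout_def by blast
  have idE: "\<forall>z\<in>gE D. fst u (fst w z) = z" and idV: "\<forall>z\<in>gV D. snd u (snd w z) = z"
  proof -
    have "cmp D u w = cmp D (idm D) (idm D)" using id cmp_idm_r[OF idm_hom[OF homD(2)[OF h]]] by simp
    then show "\<forall>z\<in>gE D. fst u (fst w z) = z" "\<forall>z\<in>gV D. snd u (snd w z) = z"
      using cmp_eqD[of D u w "idm D" "idm D"] by auto
  qed
  note wE = cmp_eq_mor[OF h h0, THEN iffD1, OF w(2)] and wk = cmp_eq_mor[OF k k0, THEN iffD1, OF w(3)]
  note uE = cmp_eq_mor[OF h0 h, THEN iffD1, OF u(2)] and uk = cmp_eq_mor[OF k0 k, THEN iffD1, OF u(3)]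
  have wD: "\<forall>z\<in>gE D. fst w z \<in> gE ?D" "\<forall>z\<in>gV D. snd w z \<in> gV ?D" using homD(6,7)[OF w(1)] by auto
  have hD: "fst h ` gE B \<subseteq> gE D" "snd h ` gV B \<subseteq> gV D" using homD(6,7)[OF h] by auto
  have kD: "fst k ` gE C \<subseteq> gE D" "snd k ` gV C \<subseteq> gV D" using homD(6,7)[OF k] by auto
  have "spo (gE A) (gE B) (gE C) (gE D) (fst f) (fst h) (fst k)"
    by (rule spo_transfer[OF pc0[unfolded POc_def, THEN conjunct1] wE[THEN conjunct1] wk[THEN conjunct1]
       idE wD(1) uE[THEN conjunct1] uk[THEN conjunct1] hD(1) kD(1)])
  moreover have "spo (gV A) (gV B) (gV C) (gV D) (snd f) (snd h) (snd k)"
    by (rule spo_transfer[OF pc0[unfolded POc_def, THEN conjunct2] wE[THEN conjunct2] wk[THEN conjunct2]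
       idV wD(2) uE[THEN conjunct2] uk[THEN conjunct2] hD(2) kD(2)])
  ultimately show ?thesis unfolding POc_def by auto
qed

definition spb :: "nat set \<Rightarrow> nat set \<Rightarrow> nat set \<Rightarrow> (nat\<Rightarrow>nat) \<Rightarrow> (nat\<Rightarrow>nat) \<Rightarrow> (nat\<Rightarrow>nat) \<Rightarrow> bool" where
  "spb A B C f h k \<longleftrightarrow> inj_on f A \<and> (\<forall>x\<in>B. h x \<in> k`C \<longrightarrow> x \<in> f`A)"

definition PBc :: "ugraph \<Rightarrow> ugraph \<Rightarrow> ugraph \<Rightarrow> umor \<Rightarrow> umor \<Rightarrow> umor \<Rightarrow> bool" where
  "PBc A B C f h k \<longleftrightarrow> spb (gE A) (gE B) (gE C) (fst f) (fst h) (fst k) \<and>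
     spb (gV A) (gV B) (gV C) (snd f) (snd h) (snd k)"

lemma spb_med:
  assumes "spb A B C f h k" "inj_on k C" "g ` A \<subseteq> C" "\<forall>a\<in>A. h (f a) = k (g a)"
    "x ` X \<subseteq> B" "y ` X \<subseteq> C" "\<forall>z\<in>X. h (x z) = k (y z)"
  shows "\<forall>z\<in>X. restrict (inv_into A f \<circ> x) X z \<in> A"
    "\<forall>z\<in>X. f (restrict (inv_into A f \<circ> x) X z) = x z"
    "\<forall>z\<in>X. g (restrict (inv_into A f \<circ> x) X z) = y z"
proof -
  have s1: "inj_on f A" and s2: "\<forall>x\<in>B. h x \<in> k`C \<longrightarrow> x \<in> f`A" using assms(1) unfolding spb_def by auto
  have im: "x z \<in> f`A" if z: "z \<in> X" for z
  proof -
    have "x z \<in> B" "y z \<in> C" using z assms(5,6) by auto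
    moreover have "h (x z) \<in> k`C" using assms(7) z \<open>y z \<in> C\<close> by auto
    ultimately show ?thesis using s2 by auto
  qed
  show A: "\<forall>z\<in>X. restrict (inv_into A f \<circ> x) X z \<in> A" using im by (auto intro: inv_into_into)
  show F: "\<forall>z\<in>X. f (restrict (inv_into A f \<circ> x) X z) = x z" using im by (auto intro: f_inv_into_f)
  show "\<forall>z\<in>X. g (restrict (inv_into A f \<circ> x) X z) = y z"
  proof
    fix z assume z: "z \<in> X"
    let ?u = "restrict (inv_into A f \<circ> x) X z"
    have "?u \<in> A" using A z by auto
    then have gC: "g ?u \<in> C" using assms(3) by auto
    have "k (g ?u) = h (f ?u)" using \<open>?u \<in> A\<close> assms(4) by auto
    also have "h (f ?u) = k (y z)" using F z assms(7) by auto
    finally show "g ?u = y z" using inj_onD[OF assms(2)] gC z assms(6) by auto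
  qed
qed

lemma spb_uniq:
  assumes "inj_on f A" "u \<in> extensional X" "u' \<in> extensional X" "\<forall>z\<in>X. u z \<in> A" "\<forall>z\<in>X. u' z \<in> A"
    "\<forall>z\<in>X. f (u z) = x z" "\<forall>z\<in>X. f (u' z) = x z"
  shows "u' = u"
proof (rule extensionalityI[OF assms(3,2)])
  fix z assume z: "z \<in> X"
  then have "f (u' z) = f (u z)" using assms(6,7) by auto
  then show "u' z = u z" using inj_onD[OF assms(1)] assms(4,5) z by auto
qed

lemma pb_intro:
  assumes cs: "comm_sq A B C D f g h k" and km: "Mm C D k" and pc: "PBc A B C f h k"
  shows "pullback A B C D f g h k"
  unfolding pullback_def
proof (intro conjI allI impI)
  show "comm_sq A B C D f g h k" by fact
  fix X x y assume x: "x \<in> hom X B" and y: "y \<in> hom X C" and xy: "cmp X h x = cmp X k y"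
  have f: "f \<in> hom A B" and g: "g \<in> hom A C" and h: "h \<in> hom B D" and k: "k \<in> hom C D"
    and hk: "cmp A h f = cmp A k g" using cs unfolding comm_sq_def by auto
  have sE: "spb (gE A) (gE B) (gE C) (fst f) (fst h) (fst k)" and sV: "spb (gV A) (gV B) (gV C) (snd f) (snd h) (snd k)"
    using pc unfolding PBc_def by auto
  define uE where "uE = restrict (inv_into (gE A) (fst f) \<circ> fst x) (gE X)"
  define uV where "uV = restrict (inv_into (gV A) (snd f) \<circ> snd x) (gV X)"
  have gsE: "fst g ` gE A \<subseteq> gE C" and gsV: "snd g ` gV A \<subseteq> gV C" using homD[OF g] by auto
  have xsE: "fst x ` gE X \<subseteq> gE B" and xsV: "snd x ` gV X \<subseteq> gV B" using homD[OF x] by auto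
  have ysE: "fst y ` gE X \<subseteq> gE C" and ysV: "snd y ` gV X \<subseteq> gV C" using homD[OF y] by auto
  have hkE: "\<forall>a\<in>gE A. fst h (fst f a) = fst k (fst g a)" and hkV: "\<forall>a\<in>gV A. snd h (snd f a) = snd k (snd g a)"
    using cmp_eqD[OF hk] by auto
  have xyE: "\<forall>z\<in>gE X. fst h (fst x z) = fst k (fst y z)" and xyV: "\<forall>z\<in>gV X. snd h (snd x z) = snd k (snd y z)"
    using cmp_eqD[OF xy] by auto
  note mE = spb_med[OF sE MmD(2)[OF km] gsE hkE xsE ysE xyE, folded uE_def]
  note mV = spb_med[OF sV MmD(3)[OF km] gsV hkV xsV ysV xyV, folded uV_def]
  have injfV: "inj_on (snd f) (gV A)" using sV unfolding spb_def by auto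
  have injfE: "inj_on (fst f) (gE A)" using sE unfolding spb_def by auto
  have uA: "ug A" and uX: "ug X" using homD[OF f] homD[OF x] by auto
  have inc: "gi A (uE e) = uV ` gi X e" if e: "e \<in> gE X" for e
  proof -
    have ue: "uE e \<in> gE A" using mE(1) e by auto
    have s1: "gi A (uE e) \<subseteq> gV A" using ugD(4)[OF uA ue] .
    have s2: "uV ` gi X e \<subseteq> gV A" using ugD(4)[OF uX e] mV(1) by auto
    have "snd f ` gi A (uE e) = gi B (fst f (uE e))" using homD(5)[OF f ue] by simp
    also have "\<dots> = gi B (fst x e)" using mE(2) e by auto
    also have "\<dots> = snd x ` gi X e" using homD(5)[OF x e] .
    also have "\<dots> = snd f ` uV ` gi X e"
    proof -
      have "\<forall>v\<in>gi X e. snd f (uV v) = snd x v" using ugD(4)[OF uX e] mV(2) by auto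
      then show ?thesis by (simp add: image_image)
    qed
    finally show ?thesis using inj_on_image_eq_iff[OF injfV s1 s2] by simp
  qed
  have uh: "(uE, uV) \<in> hom X A"
    unfolding hom_iff using uA uX mE(1) mV(1) inc by (auto simp: uE_def uV_def PiE_def Pi_def)
  show "\<exists>!u. u \<in> hom X A \<and> cmp X f u = x \<and> cmp X g u = y"
  proof (rule ex1I[of _ "(uE, uV)"])
    show "(uE, uV) \<in> hom X A \<and> cmp X f (uE, uV) = x \<and> cmp X g (uE, uV) = y"
      using uh mE mV cmp_eq_mor[OF uh x] cmp_eq_mor[OF uh y] by auto
  next
    fix u assume u: "u \<in> hom X A \<and> cmp X f u = x \<and> cmp X g u = y"
    have uh': "u \<in> hom X A" using u by simp
    have "(\<forall>e\<in>gE X. fst f (fst u e) = fst x e) \<and> (\<forall>v\<in>gV X. snd f (snd u v) = snd x v)"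
      using cmp_eq_mor[OF uh' x, of f] u by auto
    moreover have "fst u \<in> extensional (gE X)" "snd u \<in> extensional (gV X)"
      "\<forall>z\<in>gE X. fst u z \<in> gE A" "\<forall>z\<in>gV X. snd u z \<in> gV A"
      using homD(3,4,6,7)[of u X A] u by (auto simp: PiE_def)
    moreover have "uE \<in> extensional (gE X)" "uV \<in> extensional (gV X)" by (auto simp: uE_def uV_def)
    ultimately have "fst u = uE" "snd u = uV"
      using spb_uniq[OF injfE, of uE "gE X" "fst u" "fst x"] spb_uniq[OF injfV, of uV "gV X" "snd u" "snd x"] mE mV by auto
    then show "u = (uE, uV)" by (simp add: prod_eq_iff)
  qed
qed

definition pbE :: "ugraph \<Rightarrow> ugraph \<Rightarrow> umor \<Rightarrow> umor \<Rightarrow> nat set" where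
  "pbE B C h k = {e\<in>gE B. fst h e \<in> fst k ` gE C}"
definition pbV :: "ugraph \<Rightarrow> ugraph \<Rightarrow> umor \<Rightarrow> umor \<Rightarrow> nat set" where
  "pbV B C h k = {v\<in>gV B. snd h v \<in> snd k ` gV C}"
definition pb_obj :: "ugraph \<Rightarrow> ugraph \<Rightarrow> umor \<Rightarrow> umor \<Rightarrow> ugraph" where
  "pb_obj B C h k = (pbE B C h k, pbV B C h k, restrict (gi B) (pbE B C h k))"
definition pb_f :: "ugraph \<Rightarrow> ugraph \<Rightarrow> umor \<Rightarrow> umor \<Rightarrow> umor" where
  "pb_f B C h k = (restrict id (pbE B C h k), restrict id (pbV B C h k))"
definition pb_g :: "ugraph \<Rightarrow> ugraph \<Rightarrow> umor \<Rightarrow> umor \<Rightarrow> umor" where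
  "pb_g B C h k = (restrict (inv_into (gE C) (fst k) \<circ> fst h) (pbE B C h k),
                   restrict (inv_into (gV C) (snd k) \<circ> snd h) (pbV B C h k))"

lemma pb_concrete:
  assumes h: "h \<in> hom B D" and km: "Mm C D k"
  shows "comm_sq (pb_obj B C h k) B C D (pb_f B C h k) (pb_g B C h k) h k"
    "PBc (pb_obj B C h k) B C (pb_f B C h k) h k"
proof -
  have k: "k \<in> hom C D" using km by (simp add: Mm_def)
  have ikE: "inj_on (fst k) (gE C)" and ikV: "inj_on (snd k) (gV C)" using km by (auto simp: Mm_def)
  let ?A = "pb_obj B C h k" and ?f = "pb_f B C h k" and ?g = "pb_g B C h k"
  have uB: "ug B" and uC: "ug C" and uD: "ug D" using homD[OF h] homD[OF k] by auto
  have sub: "gi B e \<subseteq> pbV B C h k" if e: "e \<in> pbE B C h k" for e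
  proof
    fix v assume v: "v \<in> gi B e"
    have eB: "e \<in> gE B" using e by (simp add: pbE_def)
    obtain c where c: "c \<in> gE C" "fst h e = fst k c" using e by (auto simp: pbE_def)
    have vB: "v \<in> gV B" using ugD(4)[OF uB eB] v by auto
    have "snd h v \<in> snd h ` gi B e" using v by auto
    also have "\<dots> = gi D (fst h e)" using homD(5)[OF h eB] by simp
    also have "\<dots> = snd k ` gi C c" using c homD(5)[OF k c(1)] by simp
    also have "\<dots> \<subseteq> snd k ` gV C" using ugD(4)[OF uC c(1)] by auto
    finally show "v \<in> pbV B C h k" using vB by (simp add: pbV_def)
  qed
  have uA: "ug ?A"
  proof -
    have "finite (gE ?A)" "finite (gV ?A)" using ugD(1,2)[OF uB] by (auto simp: pb_obj_def pbE_def pbV_def)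
    moreover have "gi ?A e \<in> P12 (gV ?A)" if e: "e \<in> gE ?A" for e
    proof -
      have e': "e \<in> pbE B C h k" "e \<in> gE B" using e by (auto simp: pb_obj_def pbE_def)
      show ?thesis using P12_mono[OF ugD(6)[OF uB e'(2)] sub[OF e'(1)]] e'(1) by (simp add: pb_obj_def)
    qed
    ultimately show ?thesis unfolding ug_def by (auto simp: pb_obj_def PiE_def)
  qed
  have fhom: "?f \<in> hom ?A B"
    unfolding hom_iff
  proof (intro conjI ballI)
    fix e assume e: "e \<in> gE ?A"
    then have e': "e \<in> pbE B C h k" by (simp add: pb_obj_def)
    have "restrict id (pbV B C h k) ` gi B e = gi B e" using sub[OF e'] by (force simp: image_iff)
    then show "gi B (fst ?f e) = snd ?f ` gi ?A e" using e' by (simp add: pb_f_def pb_obj_def)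
  qed (use uA uB in \<open>auto simp: pb_f_def pb_obj_def pbE_def pbV_def PiE_def Pi_def\<close>)
  have gE_in: "\<And>e. e \<in> pbE B C h k \<Longrightarrow> fst h e \<in> fst k ` gE C" by (simp add: pbE_def)
  have gV_in: "\<And>e. e \<in> pbV B C h k \<Longrightarrow> snd h e \<in> snd k ` gV C" by (simp add: pbV_def)
  have ghom: "?g \<in> hom ?A C"
    unfolding hom_iff
  proof (intro conjI ballI)
    show "fst ?g \<in> gE ?A \<rightarrow>\<^sub>E gE C" using gE_in by (auto simp: pb_g_def pb_obj_def PiE_def Pi_def intro: inv_into_into)
    show "snd ?g \<in> gV ?A \<rightarrow>\<^sub>E gV C" using gV_in by (auto simp: pb_g_def pb_obj_def PiE_def Pi_def intro: inv_into_into)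
    fix e assume e: "e \<in> gE ?A"
    then have e': "e \<in> pbE B C h k" "e \<in> gE B" by (auto simp: pb_obj_def pbE_def)
    let ?c = "inv_into (gE C) (fst k) (fst h e)"
    have c: "?c \<in> gE C" "fst k ?c = fst h e" using gE_in[OF e'(1)] by (auto intro: inv_into_into f_inv_into_f)
    have s1: "gi C ?c \<subseteq> gV C" using ugD(4)[OF uC c(1)] .
    have gV: "\<forall>v\<in>gi B e. snd ?g v = inv_into (gV C) (snd k) (snd h v)" using sub[OF e'(1)] by (auto simp: pb_g_def)
    have s2: "snd ?g ` gi B e \<subseteq> gV C"
    proof
      fix y assume "y \<in> snd ?g ` gi B e"
      then obtain v where v: "v \<in> gi B e" "y = snd ?g v" by auto
      have hv: "snd h v \<in> snd k ` gV C" using gV_in sub[OF e'(1)] v(1) by auto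
      show "y \<in> gV C" using v gV inv_into_into[OF hv] by auto
    qed
    have "snd k ` gi C ?c = gi D (fst k ?c)" using homD(5)[OF k c(1)] by simp
    also have "\<dots> = snd h ` gi B e" using c(2) homD(5)[OF h e'(2)] by simp
    also have "\<dots> = snd k ` snd ?g ` gi B e"
    proof -
      have "\<forall>v\<in>gi B e. snd k (snd ?g v) = snd h v"
      proof
        fix v assume v: "v \<in> gi B e"
        have hv: "snd h v \<in> snd k ` gV C" using gV_in sub[OF e'(1)] v by auto
        show "snd k (snd ?g v) = snd h v" using gV v f_inv_into_f[OF hv] by auto
      qed
      then show ?thesis by (simp add: image_image)
    qed
    finally have "gi C ?c = snd ?g ` gi B e" using inj_on_image_eq_iff[OF ikV s1 s2] by simp
    then show "gi C (fst ?g e) = snd ?g ` gi ?A e" using e' by (simp add: pb_g_def pb_obj_def)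
  qed (use uA uC in auto)
  have "cmp ?A h ?f = cmp ?A k ?g"
  proof (rule cmp_eqI)
    fix x assume "x \<in> gE ?A"
    then have "x \<in> pbE B C h k" by (simp add: pb_obj_def)
    then show "fst h (fst ?f x) = fst k (fst ?g x)" using gE_in by (auto simp: pb_f_def pb_g_def intro: f_inv_into_f[symmetric])
  next
    fix x assume "x \<in> gV ?A"
    then have "x \<in> pbV B C h k" by (simp add: pb_obj_def)
    then show "snd h (snd ?f x) = snd k (snd ?g x)" using gV_in by (auto simp: pb_f_def pb_g_def intro: f_inv_into_f[symmetric])
  qed
  then show "comm_sq ?A B C D ?f ?g h k" unfolding comm_sq_def using fhom ghom h k by auto
  show "PBc ?A B C ?f h k"
    unfolding PBc_def spb_def by (auto simp: pb_f_def pb_obj_def pbE_def pbV_def inj_on_def)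
qed

lemma pb_exists: "h \<in> hom B D \<Longrightarrow> Mm C D k \<Longrightarrow> \<exists>A f g. pullback A B C D f g h k"
  using pb_intro[OF pb_concrete(1) _ pb_concrete(2)] by blast

lemma spb_transfer:
  assumes "spb A0 B C f0 h k" "\<forall>z\<in>A. f0 (w z) = f z" "\<forall>z\<in>A. u (w z) = z" "\<forall>z\<in>A0. f (u z) = f0 z"
    "\<forall>z\<in>A. w z \<in> A0" "\<forall>z\<in>A0. u z \<in> A"
  shows "spb A B C f h k"
proof -
  have s1: "inj_on f0 A0" and s2: "\<forall>x\<in>B. h x \<in> k`C \<longrightarrow> x \<in> f0`A0" using assms(1) unfolding spb_def by auto
  have "inj_on f A"
  proof (rule inj_onI)
    fix x y assume xy: "x \<in> A" "y \<in> A" "f x = f y"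
    then have "f0 (w x) = f0 (w y)" using assms(2) by metis
    then have "w x = w y" using inj_onD[OF s1 _ ] assms(5) xy(1,2) by blast
    then show "x = y" using assms(3) xy(1,2) by metis
  qed
  moreover have "x \<in> f`A" if xB: "x \<in> B" "h x \<in> k`C" for x
  proof -
    have "x \<in> f0`A0" using s2 xB by auto
    then obtain z where z: "z \<in> A0" "x = f0 z" by auto
    then have "x = f (u z)" using assms(4) by auto
    then show ?thesis using assms(6) z(1) by auto
  qed
  ultimately show ?thesis unfolding spb_def by auto
qed

lemma pb_elim:
  assumes pb: "pullback A B C D f g h k" and km: "Mm C D k"
  shows "PBc A B C f h k"
proof -
  have cs: "comm_sq A B C D f g h k" using pb by (simp add: pullback_def)
  have f: "f \<in> hom A B" and g: "g \<in> hom A C" and h: "h \<in> hom B D" and k: "k \<in> hom C D"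
    and hk: "cmp A h f = cmp A k g" using cs unfolding comm_sq_def by auto
  let ?A = "pb_obj B C h k" and ?f = "pb_f B C h k" and ?g = "pb_g B C h k"
  note cs0 = pb_concrete(1)[OF h km] and pc0 = pb_concrete(2)[OF h km]
  have pb0: "pullback ?A B C D ?f ?g h k" by (rule pb_intro[OF cs0 km pc0])
  have f0: "?f \<in> hom ?A B" and g0: "?g \<in> hom ?A C" and hk0: "cmp ?A h ?f = cmp ?A k ?g"
    using cs0 unfolding comm_sq_def by auto
  obtain u where u: "u \<in> hom ?A A" "cmp ?A f u = ?f" "cmp ?A g u = ?g"
    using pb f0 g0 hk0 unfolding pullback_def by blast
  obtain w where w: "w \<in> hom A ?A" "cmp A ?f w = f" "cmp A ?g w = g"
    using pb0 f g hk unfolding pullback_def by blast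
  have uw: "cmp A u w \<in> hom A A" using cmp_hom[OF w(1) u(1)] .
  have "cmp A f (cmp A u w) = f" using cmp_assoc[OF w(1), of f u] u(2) w(2) by simp
  moreover have "cmp A g (cmp A u w) = g" using cmp_assoc[OF w(1), of g u] u(3) w(3) by simp
  moreover have "cmp A f (idm A) = f" "cmp A g (idm A) = g" using cmp_idm_r[OF f] cmp_idm_r[OF g] by auto
  moreover have "idm A \<in> hom A A" using idm_hom[OF homD(1)[OF f]] .
  ultimately have id: "cmp A u w = idm A"
    using pb f g hk uw unfolding pullback_def by blast
  have idE: "\<forall>z\<in>gE A. fst u (fst w z) = z" and idV: "\<forall>z\<in>gV A. snd u (snd w z) = z"
  proof -
    have "cmp A u w = cmp A (idm A) (idm A)" using id cmp_idm_r[OF idm_hom[OF homD(1)[OF f]]] by simp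
    then show "\<forall>z\<in>gE A. fst u (fst w z) = z" "\<forall>z\<in>gV A. snd u (snd w z) = z"
      using cmp_eqD[of A u w "idm A" "idm A"] by auto
  qed
  note wf = cmp_eq_mor[OF w(1) f, THEN iffD1, OF w(2)] and uf = cmp_eq_mor[OF u(1) f0, THEN iffD1, OF u(2)]
  have wA: "\<forall>z\<in>gE A. fst w z \<in> gE ?A" "\<forall>z\<in>gV A. snd w z \<in> gV ?A" using homD(6,7)[OF w(1)] by auto
  have uA: "\<forall>z\<in>gE ?A. fst u z \<in> gE A" "\<forall>z\<in>gV ?A. snd u z \<in> gV A" using homD(6,7)[OF u(1)] by auto
  have "spb (gE A) (gE B) (gE C) (fst f) (fst h) (fst k)"
    by (rule spb_transfer[OF pc0[unfolded PBc_def, THEN conjunct1] wf[THEN conjunct1] idE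
       uf[THEN conjunct1] wA(1) uA(1)])
  moreover have "spb (gV A) (gV B) (gV C) (snd f) (snd h) (snd k)"
    by (rule spb_transfer[OF pc0[unfolded PBc_def, THEN conjunct2] wf[THEN conjunct2] idV
       uf[THEN conjunct2] wA(2) uA(2)])
  ultimately show ?thesis unfolding PBc_def by auto
qed

lemma pullback_iff:
  assumes "comm_sq A B C D f g h k" "Mm C D k"
  shows "pullback A B C D f g h k \<longleftrightarrow> PBc A B C f h k"
  using pb_intro[OF assms] pb_elim[of A B C D f g h k, OF _ assms(2)] by auto

locale cube_set =
  fixes A B C D A' B' C' D' :: "nat set" and f g h k f' g' h' k' a b c d :: "nat \<Rightarrow> nat"
  assumes bot: "spo A B C D f h k"
    and com: "\<forall>x\<in>A. h (f x) = k (g x)" "\<forall>x\<in>A'. h' (f' x) = k' (g' x)"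
    and cube: "\<forall>x\<in>A'. b (f' x) = f (a x)" "\<forall>x\<in>A'. c (g' x) = g (a x)"
      "\<forall>x\<in>B'. d (h' x) = h (b x)" "\<forall>x\<in>C'. d (k' x) = k (c x)"
    and maps: "f`A \<subseteq> B" "g`A \<subseteq> C" "h`B \<subseteq> D" "k`C \<subseteq> D"
      "f'`A' \<subseteq> B'" "g'`A' \<subseteq> C'" "h'`B' \<subseteq> D'" "k'`C' \<subseteq> D'"
      "a`A' \<subseteq> A" "b`B' \<subseteq> B" "c`C' \<subseteq> C" "d`D' \<subseteq> D"
    and inj: "inj_on b B'" "inj_on c C'" "inj_on d D'"
    and back1: "spb A' B' A f' b f" and back1': "spb A' A B' a f b" and back2': "spb A' A C' a g c"
begin

lemma bk: "\<forall>x\<in>B'. b x \<in> f`A \<longrightarrow> x \<in> f'`A'" "\<forall>x\<in>A. g x \<in> c`C' \<longrightarrow> x \<in> a`A'"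
  using back1 back2' unfolding spb_def by auto

lemma bt: "inj_on k C" "inj_on h (B - f`A)" "h`(B - f`A) \<inter> k`C = {}" "h`B \<union> k`C = D"
  using bot unfolding spo_def by auto

lemma fwd:
  assumes top: "spo A' B' C' D' f' h' k'"
  shows "spb B' B D' b h d" "spb C' C D' c k d"
proof -
  have t: "h'`B' \<union> k'`C' = D'" using top unfolding spo_def by auto
  have F2: "x \<in> c`C'" if x: "x \<in> C" "k x = d y" "y \<in> D'" for x y
  proof -
    have "y \<in> h'`B' \<union> k'`C'" using t x(3) by auto
    then show ?thesis
    proof
      assume "y \<in> k'`C'"
      then obtain z where z: "z \<in> C'" "y = k' z" by auto
      then have "k x = k (c z)" using x cube(4) by auto
      moreover have "c z \<in> C" using z maps(11) by auto
      ultimately have "x = c z" using inj_onD[OF bt(1)] x(1) by auto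
      then show ?thesis using z by auto
    next
      assume "y \<in> h'`B'"
      then obtain z where z: "z \<in> B'" "y = h' z" by auto
      then have e: "k x = h (b z)" using x cube(3) by auto
      have bz: "b z \<in> B" using z maps(10) by auto
      have "b z \<in> f`A"
      proof (rule ccontr)
        assume "b z \<notin> f`A"
        then have "h (b z) \<in> h`(B - f`A)" using bz by auto
        moreover have "h (b z) \<in> k`C" using e x(1) by (metis imageI)
        ultimately show False using bt(3) by blast
      qed
      then obtain a' where a': "a' \<in> A'" "z = f' a'" using bk(1) z(1) by auto
      have "h (b z) = h (f (a a'))" using a' cube(1) by auto
      also have "\<dots> = k (g (a a'))" using com(1) a' maps(9) by auto
      finally have "k x = k (g (a a'))" using e by simp
      moreover have "g (a a') \<in> C" using a' maps(9,2) by auto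
      ultimately have "x = g (a a')" using inj_onD[OF bt(1)] x(1) by auto
      also have "\<dots> = c (g' a')" using cube(2) a' by auto
      finally show ?thesis using a' maps(6) by auto
    qed
  qed
  have F1: "x \<in> b`B'" if x: "x \<in> B" "h x = d y" "y \<in> D'" for x y
  proof (cases "x \<in> f`A")
    case True
    then obtain a0 where a0: "a0 \<in> A" "x = f a0" by auto
    have "k (g a0) = d y" using com(1) a0 x(2) by auto
    then have "g a0 \<in> c`C'" using F2[of "g a0" y] a0 maps(2) x(3) by auto
    then obtain a' where a': "a' \<in> A'" "a0 = a a'" using bk(2) a0(1) by auto
    then have "x = b (f' a')" using a0 cube(1) by auto
    then show ?thesis using a' maps(5) by auto
  next
    case False
    have "y \<in> h'`B' \<union> k'`C'" using t x(3) by auto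
    then show ?thesis
    proof
      assume "y \<in> k'`C'"
      then obtain z where z: "z \<in> C'" "y = k' z" by auto
      then have "h x = k (c z)" using x cube(4) by auto
      moreover have "c z \<in> C" using z maps(11) by auto
      moreover have "h x \<in> h`(B - f`A)" using x(1) False by auto
      ultimately show ?thesis using bt(3) by (metis disjoint_iff imageI)
    next
      assume "y \<in> h'`B'"
      then obtain z where z: "z \<in> B'" "y = h' z" by auto
      then have e: "h x = h (b z)" using x cube(3) by auto
      have bz: "b z \<in> B" using z maps(10) by auto
      show ?thesis
      proof (cases "b z \<in> f`A")
        case True
        then obtain a0 where "a0 \<in> A" "b z = f a0" by auto
        then have "h x = k (g a0)" "g a0 \<in> C" using e com(1) maps(2) by auto
        moreover have "h x \<in> h`(B - f`A)" using x(1) False by auto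
        ultimately show ?thesis using bt(3) by (metis disjoint_iff imageI)
      next
        case False2: False
        have "x = b z" using inj_onD[OF bt(2) e] x(1) False bz False2 by auto
        then show ?thesis using z by auto
      qed
    qed
  qed
  show "spb B' B D' b h d" unfolding spb_def using inj(1) F1 by blast
  show "spb C' C D' c k d" unfolding spb_def using inj(2) F2 by blast
qed

lemma bwd:
  assumes F1: "spb B' B D' b h d" and F2: "spb C' C D' c k d"
  shows "spo A' B' C' D' f' h' k'"
proof -
  have f1: "\<forall>x\<in>B. h x \<in> d`D' \<longrightarrow> x \<in> b`B'" and f2: "\<forall>x\<in>C. k x \<in> d`D' \<longrightarrow> x \<in> c`C'"
    using F1 F2 unfolding spb_def by auto
  have nb: "b z \<notin> f`A" if "z \<in> B'" "z \<notin> f'`A'" for z using bk(1) that by auto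
  have i1: "inj_on k' C'"
  proof (rule inj_onI)
    fix x y assume xy: "x \<in> C'" "y \<in> C'" "k' x = k' y"
    then have "k (c x) = k (c y)" using cube(4) by metis
    then have "c x = c y" using inj_onD[OF bt(1)] xy(1,2) maps(11) by auto
    then show "x = y" using inj_onD[OF inj(2)] xy(1,2) by auto
  qed
  have i2: "inj_on h' (B' - f'`A')"
  proof (rule inj_onI)
    fix x y assume xy: "x \<in> B' - f'`A'" "y \<in> B' - f'`A'" "h' x = h' y"
    then have "h (b x) = h (b y)" using cube(3) by (metis DiffD1)
    moreover have "b x \<in> B - f`A" "b y \<in> B - f`A" using xy(1,2) nb maps(10) by auto
    ultimately have "b x = b y" using inj_onD[OF bt(2)] by auto
    then show "x = y" using inj_onD[OF inj(1)] xy(1,2) by auto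
  qed
  have d3: "h'`(B' - f'`A') \<inter> k'`C' = {}"
  proof -
    have False if xy: "x \<in> B' - f'`A'" "y \<in> C'" "h' x = k' y" for x y
    proof -
      have "h (b x) = k (c y)" using xy cube(3,4) by (metis DiffD1)
      moreover have "b x \<in> B - f`A" using xy(1) nb maps(10) by auto
      moreover have "c y \<in> C" using xy(2) maps(11) by auto
      ultimately show False using bt(3) by (metis disjoint_iff imageI)
    qed
    then show ?thesis by blast
  qed
  have "D' \<subseteq> h'`B' \<union> k'`C'"
  proof
    fix y assume y: "y \<in> D'"
    then have "d y \<in> h`B \<union> k`C" using bt(4) maps(12) by auto
    then show "y \<in> h'`B' \<union> k'`C'"
    proof
      assume "d y \<in> h`B"
      then obtain x where x: "x \<in> B" "d y = h x" by auto
      have "h x \<in> d`D'" using x(2) y by (metis imageI)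
      then have "x \<in> b`B'" using f1 x(1) by auto
      then obtain z where z: "z \<in> B'" "x = b z" by auto
      have "d y = d (h' z)" using x z cube(3) by auto
      then have "y = h' z" using inj_onD[OF inj(3)] y z maps(7) by auto
      then show ?thesis using z by auto
    next
      assume "d y \<in> k`C"
      then obtain x where x: "x \<in> C" "d y = k x" by auto
      have "k x \<in> d`D'" using x(2) y by (metis imageI)
      then have "x \<in> c`C'" using f2 x(1) by auto
      then obtain z where z: "z \<in> C'" "x = c z" by auto
      have "d y = d (k' z)" using x z cube(4) by auto
      then have "y = k' z" using inj_onD[OF inj(3)] y z maps(8) by auto
      then show ?thesis using z by auto
    qed
  qed
  then have "h'`B' \<union> k'`C' = D'" using maps(7,8) by auto
  then show ?thesis unfolding spo_def using i1 i2 d3 by auto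
qed

end

lemma img: "f \<in> hom A B \<Longrightarrow> fst f ` gE A \<subseteq> gE B \<and> snd f ` gV A \<subseteq> gV B"
  using homD(6,7) by blast

lemma cmpD2: "cmp G g f = cmp G g' f' \<Longrightarrow> (\<forall>x\<in>gE G. fst g (fst f x) = fst g' (fst f' x)) \<and> (\<forall>x\<in>gV G. snd g (snd f x) = snd g' (snd f' x))"
  using cmp_eqD by blast

lemma pushout_iff:
  assumes "comm_sq A B C D f g h k" "Mm A B f"
  shows "pushout A B C D f g h k \<longleftrightarrow> POc A B C D f h k"
  using po_intro[OF assms(1)] po_elim[of A B C D f g h k, OF _ assms(2)] by auto

lemma pullback_swap_iff: "pullback A B C D f g h k \<longleftrightarrow> pullback A C B D g f k h"
  using pullback_swap by blast

lemma VK: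
  assumes po: "pushout A B C D f g h k" and fm: "Mm A B f"
  shows "M_VK A B C D f g h k"
  unfolding M_VK_def
proof (intro allI impI)
  fix A' B' C' D' f' g' h' k' a b c d
  assume H: "comm_sq A' B' C' D' f' g' h' k' \<and> a \<in> hom A' A \<and> Mm B' B b \<and> Mm C' C c \<and> Mm D' D d \<and>
        cmp A' b f' = cmp A' f a \<and> cmp A' c g' = cmp A' g a \<and>
        cmp B' d h' = cmp B' h b \<and> cmp C' d k' = cmp C' k c \<and>
        pullback A' B' A B f' a b f \<and> pullback A' C' A C g' a c g"
  have cst: "comm_sq A' B' C' D' f' g' h' k'" and ah: "a \<in> hom A' A" and bm: "Mm B' B b" and cm: "Mm C' C c"
    and dm: "Mm D' D d" and e1: "cmp A' b f' = cmp A' f a" and e2: "cmp A' c g' = cmp A' g a"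
    and e3: "cmp B' d h' = cmp B' h b" and e4: "cmp C' d k' = cmp C' k c"
    and pb1: "pullback A' B' A B f' a b f" and pb2: "pullback A' C' A C g' a c g" using H by auto
  have cs: "comm_sq A B C D f g h k" using po by (simp add: pushout_def)
  have fh: "f \<in> hom A B" and gh: "g \<in> hom A C" and hh: "h \<in> hom B D" and kh: "k \<in> hom C D"
    and hk: "cmp A h f = cmp A k g" using cs unfolding comm_sq_def by auto
  have fh': "f' \<in> hom A' B'" and gh': "g' \<in> hom A' C'" and hh': "h' \<in> hom B' D'" and kh': "k' \<in> hom C' D'"
    and hk': "cmp A' h' f' = cmp A' k' g'" using cst unfolding comm_sq_def by auto
  have bh: "b \<in> hom B' B" and ch: "c \<in> hom C' C" and dh: "d \<in> hom D' D" using bm cm dm by (auto simp: Mm_def)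
  have pc: "POc A B C D f h k" using po_elim[OF po fm] .
  have q1: "PBc A' B' A f' b f" using pb_elim[OF pb1 fm] .
  have q1': "PBc A' A B' a f b" using pb_elim[OF pullback_swap[OF pb1] bm] .
  have q2': "PBc A' A C' a g c" using pb_elim[OF pullback_swap[OF pb2] cm] .
  have fm': "Mm A' B' f'" using fh' q1 unfolding Mm_def PBc_def spb_def by auto
  have topiff: "pushout A' B' C' D' f' g' h' k' \<longleftrightarrow> POc A' B' C' D' f' h' k'"
    by (rule pushout_iff[OF cst fm'])
  have csf1: "comm_sq B' B D' D b h' h d" unfolding comm_sq_def using bh hh' hh dh e3 by auto
  have csf2: "comm_sq C' C D' D c k' k d" unfolding comm_sq_def using ch kh' kh dh e4 by auto
  have fr1: "pullback B' D' B D h' b d h \<longleftrightarrow> PBc B' B D' b h d"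
    using pullback_swap_iff[of B' D' B D h' b d h] pullback_iff[OF csf1 dm] by simp
  have fr2: "pullback C' D' C D k' c d k \<longleftrightarrow> PBc C' C D' c k d"
    using pullback_swap_iff[of C' D' C D k' c d k] pullback_iff[OF csf2 dm] by simp
  have cE: "cube_set (gE A) (gE B) (gE C) (gE D) (gE A') (gE B') (gE C') (gE D')
     (fst f) (fst g) (fst h) (fst k) (fst f') (fst g') (fst h') (fst k') (fst a) (fst b) (fst c) (fst d)"
    by (rule cube_set.intro[OF pc[unfolded POc_def, THEN conjunct1]
       cmpD2[OF hk, THEN conjunct1] cmpD2[OF hk', THEN conjunct1]
       cmpD2[OF e1, THEN conjunct1] cmpD2[OF e2, THEN conjunct1] cmpD2[OF e3, THEN conjunct1] cmpD2[OF e4, THEN conjunct1]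
       img[OF fh, THEN conjunct1] img[OF gh, THEN conjunct1] img[OF hh, THEN conjunct1] img[OF kh, THEN conjunct1]
       img[OF fh', THEN conjunct1] img[OF gh', THEN conjunct1] img[OF hh', THEN conjunct1] img[OF kh', THEN conjunct1]
       img[OF ah, THEN conjunct1] img[OF bh, THEN conjunct1] img[OF ch, THEN conjunct1] img[OF dh, THEN conjunct1]
       MmD(2)[OF bm] MmD(2)[OF cm] MmD(2)[OF dm]
       q1[unfolded PBc_def, THEN conjunct1] q1'[unfolded PBc_def, THEN conjunct1] q2'[unfolded PBc_def, THEN conjunct1]])
  have cV: "cube_set (gV A) (gV B) (gV C) (gV D) (gV A') (gV B') (gV C') (gV D')
     (snd f) (snd g) (snd h) (snd k) (snd f') (snd g') (snd h') (snd k') (snd a) (snd b) (snd c) (snd d)"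
    by (rule cube_set.intro[OF pc[unfolded POc_def, THEN conjunct2]
       cmpD2[OF hk, THEN conjunct2] cmpD2[OF hk', THEN conjunct2]
       cmpD2[OF e1, THEN conjunct2] cmpD2[OF e2, THEN conjunct2] cmpD2[OF e3, THEN conjunct2] cmpD2[OF e4, THEN conjunct2]
       img[OF fh, THEN conjunct2] img[OF gh, THEN conjunct2] img[OF hh, THEN conjunct2] img[OF kh, THEN conjunct2]
       img[OF fh', THEN conjunct2] img[OF gh', THEN conjunct2] img[OF hh', THEN conjunct2] img[OF kh', THEN conjunct2]
       img[OF ah, THEN conjunct2] img[OF bh, THEN conjunct2] img[OF ch, THEN conjunct2] img[OF dh, THEN conjunct2]
       MmD(3)[OF bm] MmD(3)[OF cm] MmD(3)[OF dm]
       q1[unfolded PBc_def, THEN conjunct2] q1'[unfolded PBc_def, THEN conjunct2] q2'[unfolded PBc_def, THEN conjunct2]])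
  have tE: "spo (gE A') (gE B') (gE C') (gE D') (fst f') (fst h') (fst k') \<longleftrightarrow>
     spb (gE B') (gE B) (gE D') (fst b) (fst h) (fst d) \<and> spb (gE C') (gE C) (gE D') (fst c) (fst k) (fst d)"
    using cube_set.fwd[OF cE] cube_set.bwd[OF cE] by blast
  have tV: "spo (gV A') (gV B') (gV C') (gV D') (snd f') (snd h') (snd k') \<longleftrightarrow>
     spb (gV B') (gV B) (gV D') (snd b) (snd h) (snd d) \<and> spb (gV C') (gV C) (gV D') (snd c) (snd k) (snd d)"
    using cube_set.fwd[OF cV] cube_set.bwd[OF cV] by blast
  show "pushout A' B' C' D' f' g' h' k' \<longleftrightarrow>
           pullback B' D' B D h' b d h \<and> pullback C' D' C D k' c d k"
    unfolding topiff fr1 fr2 POc_def PBc_def tE tV by blast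
qed

lemma iso_Mm:
  assumes "iso A B f" shows "Mm A B f"
proof -
  obtain g where g: "g \<in> hom B A" "cmp A g f = idm A" and f: "f \<in> hom A B" using assms unfolding iso_def by auto
  have "\<forall>x\<in>gE A. fst g (fst f x) = x"
  proof
    fix x assume "x \<in> gE A"
    then show "fst g (fst f x) = x" using arg_cong[OF g(2), of "\<lambda>m. fst m x"] by simp
  qed
  moreover have "\<forall>x\<in>gV A. snd g (snd f x) = x"
  proof
    fix x assume "x \<in> gV A"
    then show "snd g (snd f x) = x" using arg_cong[OF g(2), of "\<lambda>m. snd m x"] by simp
  qed
  ultimately show ?thesis unfolding Mm_def using f by (metis inj_on_inverseI)
qed

lemma Mm_comp:
  assumes "Mm A B f" "Mm B C g" shows "Mm A C (cmp A g f)"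
proof -
  have fh: "f \<in> hom A B" and gh: "g \<in> hom B C" using assms by (auto simp: Mm_def)
  have "inj_on (fst (cmp A g f)) (gE A)"
  proof (rule inj_onI)
    fix x y assume xy: "x \<in> gE A" "y \<in> gE A" "fst (cmp A g f) x = fst (cmp A g f) y"
    then have "fst g (fst f x) = fst g (fst f y)" by simp
    then have "fst f x = fst f y" using inj_onD[OF MmD(2)[OF assms(2)]] homD(6)[OF fh] xy(1,2) by auto
    then show "x = y" using inj_onD[OF MmD(2)[OF assms(1)]] xy(1,2) by auto
  qed
  moreover have "inj_on (snd (cmp A g f)) (gV A)"
  proof (rule inj_onI)
    fix x y assume xy: "x \<in> gV A" "y \<in> gV A" "snd (cmp A g f) x = snd (cmp A g f) y"
    then have "snd g (snd f x) = snd g (snd f y)" by simp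
    then have "snd f x = snd f y" using inj_onD[OF MmD(3)[OF assms(2)]] homD(7)[OF fh] xy(1,2) by auto
    then show "x = y" using inj_onD[OF MmD(3)[OF assms(1)]] xy(1,2) by auto
  qed
  ultimately show ?thesis unfolding Mm_def using cmp_hom[OF fh gh] by auto
qed

lemma po_stable: "pushout A B C D f g h k \<Longrightarrow> Mm A B f \<Longrightarrow> Mm C D k"
proof -
  assume po: "pushout A B C D f g h k" and fm: "Mm A B f"
  have "k \<in> hom C D" using po by (simp add: pushout_def comm_sq_def)
  then show ?thesis using po_elim[OF po fm] unfolding Mm_def POc_def spo_def by auto
qed

lemma pb_stable: "pullback A B C D f g h k \<Longrightarrow> Mm C D k \<Longrightarrow> Mm A B f"
proof -
  assume pb: "pullback A B C D f g h k" and km: "Mm C D k"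
  have "f \<in> hom A B" using pb by (simp add: pullback_def comm_sq_def)
  then show ?thesis using pb_elim[OF pb km] unfolding Mm_def PBc_def spb_def by auto
qed

theorem M_adhesive_thm: "M_adhesive"
  unfolding M_adhesive_def
  apply (intro conjI)
  subgoal using po_exists by blast
  subgoal using pb_exists by blast
  subgoal using iso_Mm by blast
  subgoal using Mm_comp by blast
  subgoal using po_stable by blast
  subgoal using pb_stable by blast
  subgoal using VK by blast
  done

lemma bij_iso:
  assumes f: "f \<in> hom G H" and bE: "bij_betw (fst f) (gE G) (gE H)" and bV: "bij_betw (snd f) (gV G) (gV H)"
  shows "iso G H f"
proof -
  define g where "g = (restrict (inv_into (gE G) (fst f)) (gE H), restrict (inv_into (gV G) (snd f)) (gV H))"
  have iE: "inj_on (fst f) (gE G)" and sE: "fst f ` gE G = gE H" using bE by (auto simp: bij_betw_def)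
  have iV: "inj_on (snd f) (gV G)" and sV: "snd f ` gV G = gV H" using bV by (auto simp: bij_betw_def)
  have uG: "ug G" and uH: "ug H" using homD[OF f] by auto
  have ghom: "g \<in> hom H G"
    unfolding hom_iff
  proof (intro conjI ballI)
    show "fst g \<in> gE H \<rightarrow>\<^sub>E gE G" using sE by (auto simp: g_def PiE_def Pi_def intro: inv_into_into)
    show "snd g \<in> gV H \<rightarrow>\<^sub>E gV G" using sV by (auto simp: g_def PiE_def Pi_def intro: inv_into_into)
    fix e assume e: "e \<in> gE H"
    then obtain e0 where e0: "e0 \<in> gE G" "e = fst f e0" using sE by auto
    have ge: "fst g e = e0" using e e0 iE by (simp add: g_def inv_into_f_f)
    have sub: "gi G e0 \<subseteq> gV G" using ugD(4)[OF uG e0(1)] .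
    have "snd g ` gi H e = snd g ` snd f ` gi G e0" using homD(5)[OF f e0(1)] e0(2) by simp
    also have "\<dots> = gi G e0"
    proof -
      have "\<forall>v\<in>gi G e0. snd g (snd f v) = v" using sub iV homD(7)[OF f] by (auto simp: g_def inv_into_f_f)
      then show ?thesis by (simp add: image_image)
    qed
    finally show "gi G (fst g e) = snd g ` gi H e" using ge by simp
  qed (use uG uH in auto)
  have "cmp G g f = idm G"
    using cmp_eq_mor[OF f idm_hom[OF uG], of g] iE iV homD(6,7)[OF f] by (auto simp: g_def inv_into_f_f)
  moreover have "cmp H f g = idm H"
    using cmp_eq_mor[OF ghom idm_hom[OF uH], of f] sE sV by (auto simp: g_def f_inv_into_f)
  ultimately show ?thesis unfolding iso_def using f ghom by auto
qed

definition subg :: "ugraph \<Rightarrow> nat set \<Rightarrow> nat set \<Rightarrow> ugraph" where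
  "subg X E' V' = (E', V', restrict (gi X) E')"
definition incl :: "nat set \<Rightarrow> nat set \<Rightarrow> umor" where
  "incl E' V' = (restrict id E', restrict id V')"

lemma sub_ug:
  assumes "ug X" "E' \<subseteq> gE X" "V' \<subseteq> gV X" "\<forall>e\<in>E'. gi X e \<subseteq> V'"
  shows "ug (subg X E' V')"
proof -
  have "finite E'" "finite V'" using assms(2,3) ugD(1,2)[OF assms(1)] by (auto intro: finite_subset)
  moreover have "gi X e \<in> P12 V'" if "e \<in> E'" for e
    using P12_mono[OF ugD(6)[OF assms(1)]] that assms by auto
  ultimately show ?thesis unfolding ug_def subg_def by (auto simp: PiE_def)
qed

lemma sub_Mm:
  assumes "ug X" "E' \<subseteq> gE X" "V' \<subseteq> gV X" "\<forall>e\<in>E'. gi X e \<subseteq> V'"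
  shows "Mm (subg X E' V') X (incl E' V')"
proof -
  have "incl E' V' \<in> hom (subg X E' V') X"
    unfolding hom_iff
  proof (intro conjI ballI)
    fix e assume "e \<in> gE (subg X E' V')"
    then have e: "e \<in> E'" by (simp add: subg_def)
    have "restrict id V' ` gi X e = gi X e" using assms(4) e by (force simp: image_iff)
    then show "gi X (fst (incl E' V') e) = snd (incl E' V') ` gi (subg X E' V') e"
      using e by (simp add: incl_def subg_def)
  qed (use sub_ug[OF assms] assms in \<open>auto simp: incl_def subg_def PiE_def Pi_def\<close>)
  then show ?thesis unfolding Mm_def by (auto simp: incl_def subg_def inj_on_def)
qed

lemma hom_into_sub:
  assumes x: "x \<in> hom Y X" and "E' \<subseteq> gE X" "V' \<subseteq> gV X" "\<forall>e\<in>E'. gi X e \<subseteq> V'"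
    "fst x ` gE Y \<subseteq> E'" "snd x ` gV Y \<subseteq> V'"
  shows "x \<in> hom Y (subg X E' V')"
  unfolding hom_iff
proof (intro conjI ballI)
  show "ug (subg X E' V')" using sub_ug[OF homD(2)[OF x] assms(2-4)] .
  fix e assume e: "e \<in> gE Y"
  then have "fst x e \<in> E'" using assms(5) by auto
  then show "gi (subg X E' V') (fst x e) = snd x ` gi Y e" using homD(5)[OF x e] by (simp add: subg_def)
qed (use homD[OF x] assms(5,6) in \<open>auto simp: subg_def PiE_def Pi_def\<close>)

lemma incl_cmp:
  assumes "x \<in> hom Y X" "fst x ` gE Y \<subseteq> E'" "snd x ` gV Y \<subseteq> V'"
  shows "cmp Y (incl E' V') x = x"
proof -
  have "(\<forall>e\<in>gE Y. fst (incl E' V') (fst x e) = fst x e) \<and> (\<forall>v\<in>gV Y. snd (incl E' V') (snd x v) = snd x v)"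
    using assms(2,3) by (auto simp: incl_def)
  moreover have "fst (cmp Y (incl E' V') x) = fst x"
    by (rule extensionalityI[of _ "gE Y"]) (use calculation homD(3)[OF assms(1)] in \<open>auto simp: PiE_def\<close>)
  moreover have "snd (cmp Y (incl E' V') x) = snd x"
    by (rule extensionalityI[of _ "gV Y"]) (use calculation homD(4)[OF assms(1)] in \<open>auto simp: PiE_def\<close>)
  ultimately show ?thesis by (simp add: prod_eq_iff)
qed

theorem finitary_thm: "finitary"
  unfolding finitary_def
proof (intro allI impI)
  fix X assume uX: "ug X"
  define P where "P = {(E', V'). E' \<subseteq> gE X \<and> V' \<subseteq> gV X \<and> (\<forall>e\<in>E'. gi X e \<subseteq> V')}"
  define S where "S = (\<lambda>(E', V'). (subg X E' V', incl E' V')) ` P"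
  have "P \<subseteq> Pow (gE X) \<times> Pow (gV X)" unfolding P_def by auto
  then have "finite P" using ugD(1,2)[OF uX] by (meson finite_Pow_iff finite_SigmaI finite_subset)
  then have "finite S" unfolding S_def by simp
  moreover have "\<forall>(Y, m)\<in>S. Mm Y X m"
    unfolding S_def P_def using sub_Mm[OF uX] by auto
  moreover have "\<exists>(Y', m')\<in>S. \<exists>i. iso Y Y' i \<and> cmp Y m' i = m" if m: "Mm Y X m" for Y m
  proof -
    have mh: "m \<in> hom Y X" using m by (simp add: Mm_def)
    let ?E = "fst m ` gE Y" and ?V = "snd m ` gV Y"
    have uY: "ug Y" using homD(1)[OF mh] .
    have c: "?E \<subseteq> gE X" "?V \<subseteq> gV X" using homD(6,7)[OF mh] by auto
    have c3: "\<forall>e\<in>?E. gi X e \<subseteq> ?V"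
    proof
      fix e assume "e \<in> ?E"
      then obtain e0 where e0: "e0 \<in> gE Y" "e = fst m e0" by auto
      have "gi X e = snd m ` gi Y e0" using homD(5)[OF mh e0(1)] e0(2) by simp
      also have "\<dots> \<subseteq> ?V" using ugD(4)[OF uY e0(1)] by (rule image_mono)
      finally show "gi X e \<subseteq> ?V" .
    qed
    have inP: "(?E, ?V) \<in> P" unfolding P_def using c c3 by auto
    have mh2: "m \<in> hom Y (subg X ?E ?V)" by (rule hom_into_sub[OF mh c c3]) auto
    have "iso Y (subg X ?E ?V) m"
      by (rule bij_iso[OF mh2]) (use m in \<open>auto simp: Mm_def subg_def bij_betw_def\<close>)
    moreover have "cmp Y (incl ?E ?V) m = m" by (rule incl_cmp[OF mh]) auto
    moreover have mem: "(subg X ?E ?V, incl ?E ?V) \<in> S" unfolding S_def using inP by (auto intro: rev_image_eqI)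
    ultimately show ?thesis by (intro bexI[OF _ mem]) (simp, metis prod.collapse)
  qed
  ultimately show "\<exists>S. finite S \<and> (\<forall>(Y, m)\<in>S. Mm Y X m) \<and>
        (\<forall>Y m. Mm Y X m \<longrightarrow> (\<exists>(Y', m')\<in>S. \<exists>i. iso Y Y' i \<and> cmp Y m' i = m))" by blast
qed

theorem M_initial_thm: "M_initial"
  unfolding M_initial_def
proof (intro exI[of _ "({}, {}, \<lambda>_. undefined)"] conjI allI impI)
  show uI: "ug ({}, {}, \<lambda>_. undefined)" unfolding ug_def by (simp add: PiE_empty_domain)
  fix X assume uX: "ug X"
  show "\<exists>!m. Mm ({}, {}, \<lambda>_. undefined) X m"
  proof (rule ex1I[of _ "(\<lambda>_. undefined, \<lambda>_. undefined)"])
    show "Mm ({}, {}, \<lambda>_. undefined) X (\<lambda>_. undefined, \<lambda>_. undefined)"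
      unfolding Mm_def hom_iff using uI uX by (simp add: PiE_empty_domain)
  next
    fix m assume "Mm ({}, {}, \<lambda>_. undefined) X m"
    then have "fst m \<in> {} \<rightarrow>\<^sub>E gE X" "snd m \<in> {} \<rightarrow>\<^sub>E gV X" unfolding Mm_def hom_iff by auto
    then show "m = (\<lambda>_. undefined, \<lambda>_. undefined)" by (simp add: PiE_empty_domain prod_eq_iff)
  qed
qed

lemma eu_set:
  assumes "spo A B C D m1 n1 n2" "spb A B C m1 e1 e2" "\<forall>a\<in>A. n1 (m1 a) = n2 (m2 a)"
    "\<forall>a\<in>A. e1 (m1 a) = e2 (m2 a)" "\<forall>b\<in>B. u (n1 b) = e1 b" "\<forall>c\<in>C. u (n2 c) = e2 c"
    "inj_on e1 B" "inj_on e2 C" "m2`A \<subseteq> C"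
  shows "inj_on u D"
proof -
  have D: "D = n1`B \<union> n2`C" using assms(1) unfolding spo_def by auto
  have pb: "\<forall>x\<in>B. e1 x \<in> e2`C \<longrightarrow> x \<in> m1`A" using assms(2) unfolding spb_def by auto
  have key: "n1 b = n2 c" if bc: "b \<in> B" "c \<in> C" "e1 b = e2 c" for b c
  proof -
    have "b \<in> m1`A" using pb bc by auto
    then obtain a where a: "a \<in> A" "b = m1 a" by auto
    then have "e2 (m2 a) = e2 c" using assms(4) bc(3) by auto
    then have "m2 a = c" using inj_onD[OF assms(8)] a(1) assms(9) bc(2) by auto
    then show ?thesis using a assms(3) by auto
  qed
  show ?thesis
  proof (rule inj_onI)
    fix x y assume x: "x \<in> D" and y: "y \<in> D" and xy: "u x = u y"
    show "x = y"
    proof (cases "x \<in> n1`B")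
      case True
      then obtain b where b: "b \<in> B" "x = n1 b" by auto
      show ?thesis
      proof (cases "y \<in> n1`B")
        case True
        then obtain b' where b': "b' \<in> B" "y = n1 b'" by auto
        then have "e1 b = e1 b'" using b xy assms(5) by auto
        then show ?thesis using inj_onD[OF assms(7)] b b' by auto
      next
        case False
        then obtain c where c: "c \<in> C" "y = n2 c" using y D by auto
        then have "e1 b = e2 c" using b xy assms(5,6) by auto
        then show ?thesis using key b c by auto
      qed
    next
      case False
      then obtain c where c: "c \<in> C" "x = n2 c" using x D by auto
      show ?thesis
      proof (cases "y \<in> n1`B")
        case True
        then obtain b where b: "b \<in> B" "y = n1 b" by auto
        then have "e1 b = e2 c" using c xy assms(5,6) by auto
        then show ?thesis using key b c by auto
      next
        case False
        then obtain c' where c': "c' \<in> C" "y = n2 c'" using y D by auto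
        then have "e2 c = e2 c'" using c xy assms(6) by auto
        then show ?thesis using inj_onD[OF assms(8)] c c' by auto
      qed
    qed
  qed
qed

theorem M_effective_unions_thm: "M_effective_unions"
  unfolding M_effective_unions_def
proof (intro allI impI)
  fix A B C D E m1 m2 n1 n2 e1 e2 u
  assume H: "Mm A B m1 \<and> Mm A C m2 \<and> Mm B D n1 \<and> Mm C D n2 \<and> pushout A B C D m1 m2 n1 n2 \<and>
        Mm B E e1 \<and> Mm C E e2 \<and> pullback A B C E m1 m2 e1 e2 \<and>
        u \<in> hom D E \<and> cmp B u n1 = e1 \<and> cmp C u n2 = e2"
  then have m1: "Mm A B m1" and m2: "Mm A C m2" and po: "pushout A B C D m1 m2 n1 n2"
    and e1: "Mm B E e1" and e2: "Mm C E e2" and pb: "pullback A B C E m1 m2 e1 e2"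
    and uh: "u \<in> hom D E" and u1: "cmp B u n1 = e1" and u2: "cmp C u n2 = e2" by auto
  have pc: "POc A B C D m1 n1 n2" using po_elim[OF po m1] .
  have qc: "PBc A B C m1 e1 e2" using pb_elim[OF pb e2] .
  have c1: "cmp A n1 m1 = cmp A n2 m2" using po by (simp add: pushout_def comm_sq_def)
  have c2: "cmp A e1 m1 = cmp A e2 m2" using pb by (simp add: pullback_def comm_sq_def)
  have n1h: "n1 \<in> hom B D" and n2h: "n2 \<in> hom C D" using po by (auto simp: pushout_def comm_sq_def)
  have e1h: "e1 \<in> hom B E" and e2h: "e2 \<in> hom C E" using e1 e2 by (auto simp: Mm_def)
  note U1 = cmp_eq_mor[OF n1h e1h, THEN iffD1, OF u1] and U2 = cmp_eq_mor[OF n2h e2h, THEN iffD1, OF u2]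
  have m2h: "m2 \<in> hom A C" using m2 by (simp add: Mm_def)
  have "inj_on (fst u) (gE D)"
    by (rule eu_set[OF pc[unfolded POc_def, THEN conjunct1] qc[unfolded PBc_def, THEN conjunct1]
        cmpD2[OF c1, THEN conjunct1] cmpD2[OF c2, THEN conjunct1] U1[THEN conjunct1] U2[THEN conjunct1]
        MmD(2)[OF e1] MmD(2)[OF e2] img[OF m2h, THEN conjunct1]])
  moreover have "inj_on (snd u) (gV D)"
    by (rule eu_set[OF pc[unfolded POc_def, THEN conjunct2] qc[unfolded PBc_def, THEN conjunct2]
        cmpD2[OF c1, THEN conjunct2] cmpD2[OF c2, THEN conjunct2] U1[THEN conjunct2] U2[THEN conjunct2]
        MmD(3)[OF e1] MmD(3)[OF e2] img[OF m2h, THEN conjunct2]])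
  ultimately show "Mm D E u" unfolding Mm_def using uh by auto
qed

lemma const_img: "S \<noteq> {} \<Longrightarrow> S \<subseteq> V \<Longrightarrow> restrict (\<lambda>_. c) V ` S = {c}"
  by auto

lemma epi_intro:
  assumes e: "e \<in> hom A K" "fst e ` gE A = gE K" "snd e ` gV A = gV K"
  shows "epi A K e"
  unfolding epi_def
proof (intro conjI allI ballI impI)
  show "e \<in> hom A K" by fact
  fix X a b assume a: "a \<in> hom K X" and b: "b \<in> hom K X" and ab: "cmp A a e = cmp A b e"
  show "a = b"
  proof (rule mor_eqI[OF a b])
    fix x assume "x \<in> gE K"
    then obtain y where "y \<in> gE A" "x = fst e y" using e(2) by auto
    then show "fst a x = fst b x" using cmp_eqD(1)[OF ab] by auto
  next
    fix x assume "x \<in> gV K"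
    then obtain y where "y \<in> gV A" "x = snd e y" using e(3) by auto
    then show "snd a x = snd b x" using cmp_eqD(2)[OF ab] by auto
  qed
qed

definition tgV :: ugraph where
  "tgV = ({0,1,2}, {0,1}, restrict (\<lambda>n. if n = 0 then {0} else if n = 1 then {1} else {0,1}) {0,1,2})"
definition tgE :: ugraph where
  "tgE = ({0,1}, {0}, restrict (\<lambda>_. {0}) {0,1})"

lemma ug_tgV: "ug tgV"
  unfolding ug_def tgV_def P12_def by (auto simp: PiE_def Pi_def)
lemma ug_tgE: "ug tgE"
  unfolding ug_def tgE_def P12_def by (auto simp: PiE_def Pi_def)

lemma epi_surjV:
  assumes ep: "epi A K e" shows "snd e ` gV A = gV K"
proof (rule ccontr)
  assume "snd e ` gV A \<noteq> gV K"
  moreover have eh: "e \<in> hom A K" using ep by (simp add: epi_def)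
  ultimately obtain v where v: "v \<in> gV K" "v \<notin> snd e ` gV A" using homD(7)[OF eh] by blast
  have uK: "ug K" and uA: "ug A" using homD[OF eh] by auto
  define a :: umor where "a = (restrict (\<lambda>_. 0) (gE K), restrict (\<lambda>_. 0) (gV K))"
  define b :: umor where "b = (restrict (\<lambda>x. if v \<in> gi K x then (if gi K x = {v} then 1 else 2) else 0) (gE K),
     restrict (\<lambda>w. if w = v then 1 else 0) (gV K))"
  have ah: "a \<in> hom K tgV"
    unfolding hom_iff
  proof (intro conjI ballI)
    fix x assume x: "x \<in> gE K"
    have "snd a ` gi K x = {0}" unfolding a_def snd_conv by (rule const_img[OF ugD(5)[OF uK x] ugD(4)[OF uK x]])
    then show "gi tgV (fst a x) = snd a ` gi K x"
      using x by (simp add: a_def tgV_def)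
  qed (use uK ug_tgV in \<open>auto simp: a_def tgV_def PiE_def Pi_def\<close>)
  have bh: "b \<in> hom K tgV"
    unfolding hom_iff
  proof (intro conjI ballI)
    fix x assume x: "x \<in> gE K"
    have ne: "gi K x \<noteq> {}" and sub: "gi K x \<subseteq> gV K" using ugD(4,5)[OF uK x] by auto
    have im: "snd b ` gi K x = (\<lambda>w. if w = v then 1 else 0) ` gi K x"
      using sub by (force simp: b_def image_iff)
    show "gi tgV (fst b x) = snd b ` gi K x"
    proof (cases "v \<in> gi K x")
      case True
      show ?thesis
      proof (cases "gi K x = {v}")
        case True
        then show ?thesis using x im by (simp add: b_def tgV_def)
      next
        case False
        then obtain w where w: "w \<in> gi K x" "w \<noteq> v" using \<open>v \<in> gi K x\<close> by blast
        have "(\<lambda>w. if w = v then 1 else 0) ` gi K x = {0::nat, 1}"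
          using w \<open>v \<in> gi K x\<close> by (auto simp: image_iff)
        then show ?thesis using x im False \<open>v \<in> gi K x\<close> by (simp add: b_def tgV_def)
      qed
    next
      case False
      then have "(\<lambda>w. if w = v then 1 else 0) ` gi K x = {0::nat}" using ne by auto
      then show ?thesis using x im False by (simp add: b_def tgV_def)
    qed
  qed (use uK ug_tgV in \<open>auto simp: b_def tgV_def PiE_def Pi_def\<close>)
  have "cmp A a e = cmp A b e"
  proof (rule cmp_eqI)
    fix x assume x: "x \<in> gE A"
    have "v \<notin> gi K (fst e x)"
    proof
      assume "v \<in> gi K (fst e x)"
      then have "v \<in> snd e ` gi A x" using homD(5)[OF eh x] by simp
      then show False using v(2) ugD(4)[OF uA x] by auto
    qed
    then show "fst a (fst e x) = fst b (fst e x)" using homD(6)[OF eh x] by (simp add: a_def b_def)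
  next
    fix x assume x: "x \<in> gV A"
    then have "snd e x \<noteq> v" using v(2) by auto
    then show "snd a (snd e x) = snd b (snd e x)" using homD(7)[OF eh x] by (simp add: a_def b_def)
  qed
  then have "a = b" using ep ah bh unfolding epi_def by blast
  then have "snd a v = snd b v" by simp
  then show False using v(1) by (simp add: a_def b_def)
qed

lemma epi_surjE:
  assumes ep: "epi A K e" shows "fst e ` gE A = gE K"
proof (rule ccontr)
  assume "fst e ` gE A \<noteq> gE K"
  moreover have eh: "e \<in> hom A K" using ep by (simp add: epi_def)
  ultimately obtain v where v: "v \<in> gE K" "v \<notin> fst e ` gE A" using homD(6)[OF eh] by blast
  have uK: "ug K" and uA: "ug A" using homD[OF eh] by auto
  define a :: umor where "a = (restrict (\<lambda>_. 0) (gE K), restrict (\<lambda>_. 0) (gV K))"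
  define b :: umor where "b = (restrict (\<lambda>x. if x = v then 1 else 0) (gE K), restrict (\<lambda>_. 0) (gV K))"
  have ah: "a \<in> hom K tgE"
    unfolding hom_iff
  proof (intro conjI ballI)
    fix x assume x: "x \<in> gE K"
    have "snd a ` gi K x = {0}" unfolding a_def snd_conv by (rule const_img[OF ugD(5)[OF uK x] ugD(4)[OF uK x]])
    then show "gi tgE (fst a x) = snd a ` gi K x"
      using x by (simp add: a_def tgE_def)
  qed (use uK ug_tgE in \<open>auto simp: a_def tgE_def PiE_def Pi_def\<close>)
  have bh: "b \<in> hom K tgE"
    unfolding hom_iff
  proof (intro conjI ballI)
    fix x assume x: "x \<in> gE K"
    have "snd b ` gi K x = {0}" unfolding b_def snd_conv by (rule const_img[OF ugD(5)[OF uK x] ugD(4)[OF uK x]])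
    then show "gi tgE (fst b x) = snd b ` gi K x"
      using x by (simp add: b_def tgE_def)
  qed (use uK ug_tgE in \<open>auto simp: b_def tgE_def PiE_def Pi_def\<close>)
  have "cmp A a e = cmp A b e"
  proof (rule cmp_eqI)
    fix x assume x: "x \<in> gE A"
    then have "fst e x \<noteq> v" using v(2) by auto
    then show "fst a (fst e x) = fst b (fst e x)" using homD(6)[OF eh x] by (simp add: a_def b_def)
  next
    fix x assume x: "x \<in> gV A"
    then show "snd a (snd e x) = snd b (snd e x)" using homD(7)[OF eh x] by (simp add: a_def b_def)
  qed
  then have "a = b" using ep ah bh unfolding epi_def by blast
  then have "fst a v = fst b v" by simp
  then show False using v(1) by (simp add: a_def b_def)
qed

lemma uq_set:
  assumes "e`A = K" "e'`A = K'" "\<forall>x\<in>A. m (e x) = m' (e' x)" "inj_on m K" "inj_on m' K'"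
  shows "bij_betw (restrict (inv_into K' m' \<circ> m) K) K K'"
    "\<forall>x\<in>A. restrict (inv_into K' m' \<circ> m) K (e x) = e' x"
    "\<forall>z\<in>K. m' (restrict (inv_into K' m' \<circ> m) K z) = m z"
    "\<forall>z\<in>K. restrict (inv_into K' m' \<circ> m) K z \<in> K'"
proof -
  let ?i = "restrict (inv_into K' m' \<circ> m) K"
  have mm: "m`K = m'`K'"
  proof
    show "m`K \<subseteq> m'`K'"
    proof
      fix y assume "y \<in> m`K"
      then obtain z where z: "z \<in> K" "y = m z" by blast
      then obtain x where x: "x \<in> A" "z = e x" using assms(1) by blast
      have "y = m' (e' x)" using z x assms(3) by simp
      moreover have "e' x \<in> K'" using x assms(2) by blast
      ultimately show "y \<in> m'`K'" by blast
    qed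
    show "m'`K' \<subseteq> m`K"
    proof
      fix y assume "y \<in> m'`K'"
      then obtain z where z: "z \<in> K'" "y = m' z" by blast
      then obtain x where x: "x \<in> A" "z = e' x" using assms(2) by blast
      have "y = m (e x)" using z x assms(3) by simp
      moreover have "e x \<in> K" using x assms(1) by blast
      ultimately show "y \<in> m`K" by blast
    qed
  qed
  have inK: "m z \<in> m'`K'" if "z \<in> K" for z using mm that by blast
  have A: "\<forall>z\<in>K. ?i z \<in> K'"
  proof
    fix z assume z: "z \<in> K"
    have "inv_into K' m' (m z) \<in> K'" by (rule inv_into_into[OF inK[OF z]])
    then show "?i z \<in> K'" using z by simp
  qed
  have B: "\<forall>z\<in>K. m' (?i z) = m z"
  proof
    fix z assume z: "z \<in> K"
    have "m' (inv_into K' m' (m z)) = m z" by (rule f_inv_into_f[OF inK[OF z]])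
    then show "m' (?i z) = m z" using z by simp
  qed
  show "\<forall>z\<in>K. ?i z \<in> K'" by (fact A)
  show "\<forall>z\<in>K. m' (?i z) = m z" by (fact B)
  show "\<forall>x\<in>A. ?i (e x) = e' x"
  proof
    fix x assume x: "x \<in> A"
    have ex: "e x \<in> K" and ex': "e' x \<in> K'" using x assms(1,2) by blast+
    have "m' (?i (e x)) = m (e x)" using B ex by blast
    also have "\<dots> = m' (e' x)" using assms(3) x by blast
    finally have "m' (?i (e x)) = m' (e' x)" .
    then show "?i (e x) = e' x" using inj_onD[OF assms(5) _ A[rule_format, OF ex] ex'] by blast
  qed
  have "inj_on ?i K"
  proof (rule inj_onI)
    fix x y assume xy: "x \<in> K" "y \<in> K" "?i x = ?i y"
    have "m x = m' (?i x)" using B xy(1) by simp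
    also have "\<dots> = m' (?i y)" using xy(3) by simp
    also have "\<dots> = m y" using B xy(2) by simp
    finally show "x = y" using inj_onD[OF assms(4) _ xy(1,2)] by blast
  qed
  moreover have "?i ` K = K'"
  proof
    show "?i ` K \<subseteq> K'" using A by blast
    show "K' \<subseteq> ?i ` K"
    proof
      fix z' assume z': "z' \<in> K'"
      then have "m' z' \<in> m`K" using mm by blast
      then obtain z where z: "z \<in> K" "m' z' = m z" by blast
      then have "m' (?i z) = m' z'" using B by simp
      then have "?i z = z'" using inj_onD[OF assms(5) _ A[rule_format, OF z(1)] z'] by blast
      then show "z' \<in> ?i ` K" using z(1) by blast
    qed
  qed
  ultimately show "bij_betw ?i K K'" unfolding bij_betw_def by blast
qed

theorem epi_M_factorization_thm: "epi_M_factorization"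
  unfolding epi_M_factorization_def
proof (intro allI impI conjI)
  fix A B f assume fh: "f \<in> hom A B"
  let ?E = "fst f ` gE A" and ?V = "snd f ` gV A"
  have uA: "ug A" and uB: "ug B" using homD[OF fh] by auto
  have c: "?E \<subseteq> gE B" "?V \<subseteq> gV B" using homD(6,7)[OF fh] by auto
  have c3: "\<forall>e\<in>?E. gi B e \<subseteq> ?V"
  proof
    fix e assume "e \<in> ?E"
    then obtain e0 where e0: "e0 \<in> gE A" "e = fst f e0" by auto
    have "gi B e = snd f ` gi A e0" using homD(5)[OF fh e0(1)] e0(2) by simp
    also have "\<dots> \<subseteq> ?V" using ugD(4)[OF uA e0(1)] by (rule image_mono)
    finally show "gi B e \<subseteq> ?V" .
  qed
  have fh2: "f \<in> hom A (subg B ?E ?V)" by (rule hom_into_sub[OF fh c c3]) auto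
  have "epi A (subg B ?E ?V) f" by (rule epi_intro[OF fh2]) (auto simp: subg_def)
  moreover have "Mm (subg B ?E ?V) B (incl ?E ?V)" by (rule sub_Mm[OF uB c c3])
  moreover have "cmp A (incl ?E ?V) f = f" by (rule incl_cmp[OF fh]) auto
  ultimately show "\<exists>K e m. epi A K e \<and> Mm K B m \<and> cmp A m e = f" by blast
next
  fix A B f K e m K' e' m'
  assume fh: "f \<in> hom A B"
    and H: "epi A K e \<and> Mm K B m \<and> cmp A m e = f \<and> epi A K' e' \<and> Mm K' B m' \<and> cmp A m' e' = f"
  show "\<exists>i. iso K K' i \<and> cmp A i e = e' \<and> cmp K m' i = m"
  proof -
    from H have ep: "epi A K e" and mm: "Mm K B m" and me: "cmp A m e = f" and ep': "epi A K' e'"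
      and mm': "Mm K' B m'" and me': "cmp A m' e' = f" by auto
    have eh: "e \<in> hom A K" and eh': "e' \<in> hom A K'" using ep ep' by (auto simp: epi_def)
    have mh: "m \<in> hom K B" and mh': "m' \<in> hom K' B" using mm mm' by (auto simp: Mm_def)
    have eq: "cmp A m e = cmp A m' e'" using me me' by simp
    note sE = uq_set[OF epi_surjE[OF ep] epi_surjE[OF ep'] cmpD2[OF eq, THEN conjunct1] MmD(2)[OF mm] MmD(2)[OF mm']]
    note sV = uq_set[OF epi_surjV[OF ep] epi_surjV[OF ep'] cmpD2[OF eq, THEN conjunct2] MmD(3)[OF mm] MmD(3)[OF mm']]
    define i where "i = (restrict (inv_into (gE K') (fst m') \<circ> fst m) (gE K), restrict (inv_into (gV K') (snd m') \<circ> snd m) (gV K))"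
    have uK: "ug K" and uK': "ug K'" using homD[OF eh] homD[OF eh'] by auto
    have ih: "i \<in> hom K K'"
      unfolding hom_iff
    proof (intro conjI ballI)
      show "fst i \<in> gE K \<rightarrow>\<^sub>E gE K'" using sE(4) by (auto simp: i_def PiE_def Pi_def)
      show "snd i \<in> gV K \<rightarrow>\<^sub>E gV K'" using sV(4) by (auto simp: i_def PiE_def Pi_def)
      fix x assume x: "x \<in> gE K"
      have ix: "fst i x \<in> gE K'" using sE(4) x by (simp add: i_def)
      have s1: "gi K' (fst i x) \<subseteq> gV K'" using ugD(4)[OF uK' ix] .
      have s2: "snd i ` gi K x \<subseteq> gV K'" using sV(4) ugD(4)[OF uK x] by (auto simp: i_def)
      have "snd m' ` gi K' (fst i x) = gi B (fst m' (fst i x))" using homD(5)[OF mh' ix] by simp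
      also have "\<dots> = gi B (fst m x)" using sE(3) x by (simp add: i_def)
      also have "\<dots> = snd m ` gi K x" using homD(5)[OF mh x] .
      also have "\<dots> = snd m' ` snd i ` gi K x"
      proof -
        have "\<forall>v\<in>gi K x. snd m' (snd i v) = snd m v" using sV(3) ugD(4)[OF uK x] by (auto simp: i_def)
        then show ?thesis by (simp add: image_image)
      qed
      finally show "gi K' (fst i x) = snd i ` gi K x"
        using inj_on_image_eq_iff[OF MmD(3)[OF mm'] s1 s2] by simp
    qed (use uK uK' in auto)
    have "iso K K' i" by (rule bij_iso[OF ih]) (use sE(1) sV(1) in \<open>simp_all add: i_def\<close>)
    moreover have "cmp A i e = e'"
      using cmp_eq_mor[OF eh eh', of i] sE(2) sV(2) by (simp add: i_def)
    moreover have "cmp K m' i = m"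
      using cmp_eq_mor[OF ih mh, of m'] sE(3) sV(3) by (simp add: i_def)
    ultimately show "\<exists>i. iso K K' i \<and> cmp A i e = e' \<and> cmp K m' i = m" by blast
  qed
qed

definition fpcV :: "ugraph \<Rightarrow> ugraph \<Rightarrow> ugraph \<Rightarrow> umor \<Rightarrow> umor \<Rightarrow> nat set" where
  "fpcV A B D a b = gV D - snd b ` (gV B - snd a ` gV A)"
definition fpcE :: "ugraph \<Rightarrow> ugraph \<Rightarrow> ugraph \<Rightarrow> umor \<Rightarrow> umor \<Rightarrow> nat set" where
  "fpcE A B D a b = {e \<in> gE D - fst b ` (gE B - fst a ` gE A). gi D e \<subseteq> fpcV A B D a b}"

lemma fpc_set:
  assumes "inj_on b B" "a`A \<subseteq> B" "p`A' \<subseteq> A" "r`C' \<subseteq> D" "\<forall>y\<in>C'. r y \<in> b`B \<longrightarrow> y \<in> q`A'"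
    "\<forall>x\<in>A'. b (a (p x)) = r (q x)"
  shows "r`C' \<subseteq> D - b`(B - a`A)"
proof
  fix z assume "z \<in> r`C'"
  then obtain y where y: "y \<in> C'" "z = r y" by blast
  have "z \<notin> b`(B - a`A)"
  proof
    assume "z \<in> b`(B - a`A)"
    then obtain w where w: "w \<in> B" "w \<notin> a`A" "z = b w" by blast
    have "r y = b w" using w(3) y(2) by simp
    then have "r y \<in> b`B" using w(1) by simp
    then have "y \<in> q`A'" using assms(5) y(1) by blast
    then obtain x where x: "x \<in> A'" "y = q x" by blast
    have pa: "a (p x) \<in> B" "a (p x) \<in> a`A" using assms(2,3) x(1) by blast+
    have "b w = b (a (p x))" using w(3) y(2) x assms(6) by simp
    then have "w = a (p x)" using inj_onD[OF assms(1) _ w(1) pa(1)] by blast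
    then show False using w(2) pa(2) by blast
  qed
  then show "z \<in> D - b`(B - a`A)" using y assms(4) by blast
qed

lemma fpc_construct:
  assumes am: "Mm A B a" and bm: "Mm B D b"
  shows "FPC A B (subg D (fpcE A B D a b) (fpcV A B D a b)) D a b
     (incl (fpcE A B D a b) (fpcV A B D a b)) (cmp A b a)"
proof -
  let ?E = "fpcE A B D a b" and ?V = "fpcV A B D a b"
  let ?C = "subg D ?E ?V" and ?c = "incl ?E ?V" and ?d = "cmp A b a"
  have ah: "a \<in> hom A B" and bh: "b \<in> hom B D" using am bm by (auto simp: Mm_def)
  have uA: "ug A" and uB: "ug B" and uD: "ug D" using homD[OF ah] homD[OF bh] by auto
  have cE: "?E \<subseteq> gE D" and cV: "?V \<subseteq> gV D" by (auto simp: fpcE_def fpcV_def)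
  have c3: "\<forall>e\<in>?E. gi D e \<subseteq> ?V" by (auto simp: fpcE_def)
  have cm: "Mm ?C D ?c" by (rule sub_Mm[OF uD cE cV c3])
  have ch: "?c \<in> hom ?C D" using cm by (simp add: Mm_def)
  have dD: "?d \<in> hom A D" by (rule cmp_hom[OF ah bh])
  have dV: "snd ?d ` gV A \<subseteq> ?V"
  proof
    fix z assume "z \<in> snd ?d ` gV A"
    then obtain v where v: "v \<in> gV A" "z = snd ?d v" by blast
    then have zv: "z = snd b (snd a v)" by simp
    have av: "snd a v \<in> gV B" using homD(7)[OF ah v(1)] .
    have nz: "z \<notin> snd b ` (gV B - snd a ` gV A)"
    proof
      assume "z \<in> snd b ` (gV B - snd a ` gV A)"
      then obtain w where w: "w \<in> gV B" "w \<notin> snd a ` gV A" "z = snd b w" by blast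
      have "snd b w = snd b (snd a v)" using w(3) zv by simp
      then have "w = snd a v" using inj_onD[OF MmD(3)[OF bm] _ w(1) av] by blast
      then show False using w(2) v(1) by blast
    qed
    have "z \<in> gV D" using homD(7)[OF bh av] zv by simp
    then show "z \<in> ?V" using nz unfolding fpcV_def by blast
  qed
  have dE: "fst ?d ` gE A \<subseteq> ?E"
  proof
    fix z assume "z \<in> fst ?d ` gE A"
    then obtain v where v: "v \<in> gE A" "z = fst ?d v" by blast
    then have zv: "z = fst b (fst a v)" by simp
    have av: "fst a v \<in> gE B" using homD(6)[OF ah v(1)] .
    have nz: "z \<notin> fst b ` (gE B - fst a ` gE A)"
    proof
      assume "z \<in> fst b ` (gE B - fst a ` gE A)"
      then obtain w where w: "w \<in> gE B" "w \<notin> fst a ` gE A" "z = fst b w" by blast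
      have "fst b w = fst b (fst a v)" using w(3) zv by simp
      then have "w = fst a v" using inj_onD[OF MmD(2)[OF bm] _ w(1) av] by blast
      then show False using w(2) v(1) by blast
    qed
    have gz: "gi D z \<subseteq> ?V"
    proof -
      have "gi D z = snd ?d ` gi A v" using homD(5)[OF dD v(1)] v(2) by simp
      also have "\<dots> \<subseteq> snd ?d ` gV A" using ugD(4)[OF uA v(1)] by (rule image_mono)
      finally show ?thesis using dV by blast
    qed
    have "z \<in> gE D" using homD(6)[OF bh av] zv by simp
    then show "z \<in> ?E" using nz gz unfolding fpcE_def by blast
  qed
  have dh: "?d \<in> hom A ?C" by (rule hom_into_sub[OF dD cE cV c3 dE dV])
  have cdd: "cmp A ?c ?d = ?d" by (rule incl_cmp[OF dD dE dV])
  have cs: "comm_sq A B ?C D a ?d b ?c" unfolding comm_sq_def using ah dh bh ch cdd by auto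
  have pcE: "spb (gE A) (gE B) (gE ?C) (fst a) (fst b) (fst ?c)"
    unfolding spb_def
  proof (intro conjI ballI impI)
    show "inj_on (fst a) (gE A)" using MmD(2)[OF am] .
    fix x assume x: "x \<in> gE B" and "fst b x \<in> fst ?c ` gE ?C"
    then have "fst b x \<in> ?E" by (auto simp: incl_def subg_def)
    then have "fst b x \<notin> fst b ` (gE B - fst a ` gE A)" by (simp add: fpcE_def)
    then show "x \<in> fst a ` gE A" using x by blast
  qed
  have pcV: "spb (gV A) (gV B) (gV ?C) (snd a) (snd b) (snd ?c)"
    unfolding spb_def
  proof (intro conjI ballI impI)
    show "inj_on (snd a) (gV A)" using MmD(3)[OF am] .
    fix x assume x: "x \<in> gV B" and "snd b x \<in> snd ?c ` gV ?C"
    then have "snd b x \<in> ?V" by (auto simp: incl_def subg_def)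
    then have "snd b x \<notin> snd b ` (gV B - snd a ` gV A)" by (simp add: fpcV_def)
    then show "x \<in> snd a ` gV A" using x by blast
  qed
  have pb: "pullback A B ?C D a ?d b ?c" by (rule pb_intro[OF cs cm]) (simp add: PBc_def pcE pcV)
  have up: "\<exists>!s. s \<in> hom C' ?C \<and> cmp C' ?c s = r \<and> cmp A' s q = cmp A' ?d p"
    if H: "p \<in> hom A' A \<and> r \<in> hom C' D \<and> pullback A' B C' D (cmp A' a p) q b r" for A' C' p q r
  proof -
    have ph: "p \<in> hom A' A" and rh: "r \<in> hom C' D" and pb': "pullback A' B C' D (cmp A' a p) q b r" using H by auto
    have qh: "q \<in> hom A' C'" and eq: "cmp A' b (cmp A' a p) = cmp A' r q"
      using pb' by (auto simp: pullback_def comm_sq_def)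
    have Q: "PBc A' C' B q r b" using pb_elim[OF pullback_swap[OF pb'] bm] .
    have eqE: "\<forall>x\<in>gE A'. fst b (fst a (fst p x)) = fst r (fst q x)"
      using cmpD2[OF eq] by simp
    have eqV: "\<forall>x\<in>gV A'. snd b (snd a (snd p x)) = snd r (snd q x)"
      using cmpD2[OF eq] by simp
    have rV: "snd r ` gV C' \<subseteq> ?V" unfolding fpcV_def
      by (rule fpc_set[OF MmD(3)[OF bm] img[OF ah, THEN conjunct2] img[OF ph, THEN conjunct2]
          img[OF rh, THEN conjunct2] _ eqV]) (use Q in \<open>simp add: PBc_def spb_def\<close>)
    have rE0: "fst r ` gE C' \<subseteq> gE D - fst b ` (gE B - fst a ` gE A)"
      by (rule fpc_set[OF MmD(2)[OF bm] img[OF ah, THEN conjunct1] img[OF ph, THEN conjunct1]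
          img[OF rh, THEN conjunct1] _ eqE]) (use Q in \<open>simp add: PBc_def spb_def\<close>)
    have rE: "fst r ` gE C' \<subseteq> ?E"
    proof
      fix z assume z: "z \<in> fst r ` gE C'"
      then obtain y where y: "y \<in> gE C'" "z = fst r y" by blast
      have "gi D z = snd r ` gi C' y" using homD(5)[OF rh y(1)] y(2) by simp
      also have "\<dots> \<subseteq> snd r ` gV C'" using ugD(4)[OF homD(1)[OF rh] y(1)] by (rule image_mono)
      finally have "gi D z \<subseteq> ?V" using rV by blast
      moreover have "z \<in> gE D - fst b ` (gE B - fst a ` gE A)" using rE0 z by (rule subsetD)
      ultimately show "z \<in> ?E" unfolding fpcE_def by blast
    qed
    have rC: "r \<in> hom C' ?C" by (rule hom_into_sub[OF rh cE cV c3 rE rV])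
    show ?thesis
    proof (rule ex1I[of _ r])
      have "cmp C' ?c r = r" by (rule incl_cmp[OF rh rE rV])
      moreover have "cmp A' r q = cmp A' ?d p"
      proof (rule cmp_eqI)
        fix x assume x: "x \<in> gE A'"
        then show "fst r (fst q x) = fst ?d (fst p x)" using eqE homD(6)[OF ph x] by simp
      next
        fix x assume x: "x \<in> gV A'"
        then show "snd r (snd q x) = snd ?d (snd p x)" using eqV homD(7)[OF ph x] by simp
      qed
      ultimately show "r \<in> hom C' ?C \<and> cmp C' ?c r = r \<and> cmp A' r q = cmp A' ?d p" using rC by auto
    next
      fix s assume s: "s \<in> hom C' ?C \<and> cmp C' ?c s = r \<and> cmp A' s q = cmp A' ?d p"
      then have sh: "s \<in> hom C' ?C" and sc: "cmp C' ?c s = r" by auto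
      show "s = r"
      proof (rule mor_eqI[OF sh rh])
        fix e assume e: "e \<in> gE C'"
        have "fst s e \<in> ?E" using homD(6)[OF sh e] by (simp add: subg_def)
        then show "fst s e = fst r e" using arg_cong[OF sc, of "\<lambda>m. fst m e"] e by (simp add: incl_def)
      next
        fix v assume v: "v \<in> gV C'"
        have "snd s v \<in> ?V" using homD(7)[OF sh v] by (simp add: subg_def)
        then show "snd s v = snd r v" using arg_cong[OF sc, of "\<lambda>m. snd m v"] v by (simp add: incl_def)
      qed
    qed
  qed
  show ?thesis unfolding FPC_def using pb up by blast
qed

theorem FPCs_exist_thm: "FPCs_of_M_exist"
  unfolding FPCs_of_M_exist_def using fpc_construct by blast

lemma inj_transfer:
  assumes "inj_on c0 C0" "\<forall>z\<in>C. c z = c0 (t z)" "\<forall>z\<in>C. s (t z) = z" "t`C \<subseteq> C0"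
  shows "inj_on c C"
proof (rule inj_onI)
  fix x y assume xy: "x \<in> C" "y \<in> C" "c x = c y"
  then have "c0 (t x) = c0 (t y)" using assms(2) by simp
  then have "t x = t y" using inj_onD[OF assms(1)] assms(4) xy(1,2) by blast
  then show "x = y" using assms(3) xy(1,2) by metis
qed

theorem M_stable_FPC_thm: "M_stable_under_FPC"
  unfolding M_stable_under_FPC_def
proof (intro allI impI)
  fix A B C D a b c d
  assume H: "Mm A B a \<and> Mm B D b \<and> FPC A B C D a b c d"
  then have am: "Mm A B a" and bm: "Mm B D b" and F: "FPC A B C D a b c d" by auto
  let ?E = "fpcE A B D a b" and ?V = "fpcV A B D a b"
  let ?C = "subg D ?E ?V" and ?c = "incl ?E ?V" and ?d = "cmp A b a"
  have F0: "FPC A B ?C D a b ?c ?d" by (rule fpc_construct[OF am bm])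
  have pb: "pullback A B C D a d b c" and upF: "\<forall>A' C' p q r. p \<in> hom A' A \<and> r \<in> hom C' D \<and> pullback A' B C' D (cmp A' a p) q b r \<longrightarrow>
        (\<exists>!s. s \<in> hom C' C \<and> cmp C' c s = r \<and> cmp A' s q = cmp A' d p)"
    using F unfolding FPC_def by auto
  have pb0: "pullback A B ?C D a ?d b ?c" and up0: "\<forall>A' C' p q r. p \<in> hom A' A \<and> r \<in> hom C' D \<and> pullback A' B C' D (cmp A' a p) q b r \<longrightarrow>
        (\<exists>!s. s \<in> hom C' ?C \<and> cmp C' ?c s = r \<and> cmp A' s q = cmp A' ?d p)"
    using F0 unfolding FPC_def by auto
  have ah: "a \<in> hom A B" and dh: "d \<in> hom A C" and bh: "b \<in> hom B D" and ch: "c \<in> hom C D"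
    and ba: "cmp A b a = cmp A c d" using pb by (auto simp: pullback_def comm_sq_def)
  have ch0: "?c \<in> hom ?C D" and dh0: "?d \<in> hom A ?C" using pb0 by (auto simp: pullback_def comm_sq_def)
  have uA: "ug A" using homD(1)[OF ah] .
  have idA: "idm A \<in> hom A A" using idm_hom[OF uA] .
  have aid: "cmp A a (idm A) = a" using cmp_idm_r[OF ah] .
  have "\<exists>!s. s \<in> hom ?C C \<and> cmp ?C c s = ?c \<and> cmp A s ?d = cmp A d (idm A)"
    by (rule upF[rule_format, where A'=A and C'="?C" and p="idm A" and q="?d" and r="?c"]) (simp add: idA ch0 aid pb0)
  then obtain s where s: "s \<in> hom ?C C" "cmp ?C c s = ?c" "cmp A s ?d = cmp A d (idm A)"
    by (meson ex1E)
  have "\<exists>!t. t \<in> hom C ?C \<and> cmp C ?c t = c \<and> cmp A t d = cmp A ?d (idm A)"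
    by (rule up0[rule_format, where A'=A and C'=C and p="idm A" and q=d and r=c]) (simp add: idA ch aid pb)
  then obtain t where t: "t \<in> hom C ?C" "cmp C ?c t = c" "cmp A t d = cmp A ?d (idm A)"
    by (meson ex1E)
  have st: "cmp C s t \<in> hom C C" by (rule cmp_hom[OF t(1) s(1)])
  have "cmp C c (cmp C s t) = c" using cmp_assoc[OF t(1), of c s] s(2) t(2) by simp
  moreover have "cmp A (cmp C s t) d = cmp A d (idm A)"
  proof -
    have "cmp A (cmp C s t) d = cmp A s (cmp A t d)" using cmp_assoc[OF dh, of s t] by simp
    also have "\<dots> = cmp A s ?d" using t(3) cmp_idm_r[OF dh0] by simp
    also have "\<dots> = cmp A d (idm A)" using s(3) .
    finally show ?thesis .
  qed
  moreover have "cmp C c (idm C) = c" using cmp_idm_r[OF ch] .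
  moreover have "cmp A (idm C) d = cmp A d (idm A)" using cmp_idm_l[OF dh] cmp_idm_r[OF dh] by simp
  moreover have "idm C \<in> hom C C" using idm_hom[OF homD(1)[OF ch]] .
  moreover have U: "\<exists>!u. u \<in> hom C C \<and> cmp C c u = c \<and> cmp A u d = cmp A d (idm A)"
    by (rule upF[rule_format, where A'=A and C'=C and p="idm A" and q=d and r=c]) (simp add: idA ch aid pb)
  ultimately have stid: "cmp C s t = idm C" using st by (metis (no_types, lifting) U ex1E)
  have sE: "\<forall>z\<in>gE C. fst s (fst t z) = z" and sV: "\<forall>z\<in>gV C. snd s (snd t z) = z"
  proof -
    have "cmp C s t = cmp C (idm C) (idm C)" using stid cmp_idm_r[OF idm_hom[OF homD(1)[OF ch]]] by simp
    then show "\<forall>z\<in>gE C. fst s (fst t z) = z" "\<forall>z\<in>gV C. snd s (snd t z) = z"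
      using cmp_eqD[of C s t "idm C" "idm C"] by auto
  qed
  have tc: "cmp C ?c t = cmp C c (idm C)" using t(2) cmp_idm_r[OF ch] by simp
  have tcE: "\<forall>z\<in>gE C. fst c z = fst ?c (fst t z)" and tcV: "\<forall>z\<in>gV C. snd c z = snd ?c (snd t z)"
    using cmpD2[OF tc] by auto
  have cm0: "Mm ?C D ?c" by (rule sub_Mm[OF homD(2)[OF bh]]) (auto simp: fpcE_def fpcV_def)
  have injc: "inj_on (fst c) (gE C)" "inj_on (snd c) (gV C)"
    using inj_transfer[OF MmD(2)[OF cm0] tcE sE img[OF t(1), THEN conjunct1]]
      inj_transfer[OF MmD(3)[OF cm0] tcV sV img[OF t(1), THEN conjunct2]] by auto
  have cMm: "Mm C D c" unfolding Mm_def using ch injc by auto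
  have dMm: "Mm A C d"
  proof -
    have baE: "\<forall>x\<in>gE A. fst b (fst a x) = fst c (fst d x)" and baV: "\<forall>x\<in>gV A. snd b (snd a x) = snd c (snd d x)"
      using cmpD2[OF ba] by auto
    have "inj_on (fst d) (gE A)"
    proof (rule inj_onI)
      fix x y assume xy: "x \<in> gE A" "y \<in> gE A" "fst d x = fst d y"
      then have "fst b (fst a x) = fst b (fst a y)" using baE by metis
      then have "fst a x = fst a y" using inj_onD[OF MmD(2)[OF bm]] homD(6)[OF ah] xy(1,2) by blast
      then show "x = y" using inj_onD[OF MmD(2)[OF am]] xy(1,2) by blast
    qed
    moreover have "inj_on (snd d) (gV A)"
    proof (rule inj_onI)
      fix x y assume xy: "x \<in> gV A" "y \<in> gV A" "snd d x = snd d y"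
      then have "snd b (snd a x) = snd b (snd a y)" using baV by metis
      then have "snd a x = snd a y" using inj_onD[OF MmD(3)[OF bm]] homD(7)[OF ah] xy(1,2) by blast
      then show "x = y" using inj_onD[OF MmD(3)[OF am]] xy(1,2) by blast
    qed
    ultimately show ?thesis unfolding Mm_def using dh by auto
  qed
  show "Mm C D c \<and> Mm A C d" using cMm dMm by auto
qed

theorem mainTheorem1:
  shows "M_adhesive \<and> finitary \<and> M_initial \<and> M_effective_unions \<and> epi_M_factorization \<and>
         FPCs_of_M_exist \<and> M_stable_under_FPC"
  using M_adhesive_thm finitary_thm M_initial_thm M_effective_unions_thm epi_M_factorization_thm
    FPCs_exist_thm M_stable_FPC_thm by blast

end
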